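(* Let $s\in\mathbb R$, $p,q\in(0,+\infty]$ and $x_0\in\mathbb R^d$, and assume the wavelet system satisfies the dyadic covering property. Then the set of sequences $\mathcal D\in b^{s,q}_p$ such that $\delta_{\mathcal D}(x_0)=-s+\frac dp$ is prevalent in $b^{s,q}_p$, residual in $b^{s,q}_p$ (it contains a countable intersection of dense open subsets), and maximal lineable in $b^{s,q}_p$ (its union with $\{0\}$ contains a vector subspace whose Hamel dimension equals that of $b^{s,q}_p$).
   Context: Setting: integers $d,N\ge1$, bounded fast-decaying $\psi^{(1)},\dots,\psi^{(N)}:\mathbb R^d\to\mathbb C$, wavelets $\psi^{(i)}_{j,k}(x)=\psi^{(i)}(2^jx-k)$, $j\ge0$, $k\in\mathbb Z^d$; dyadic cubes $\lambda_{j,k}=\prod_{m=1}^d[k_m2^{-j},(k_m+1)2^{-j})$ of scale $j$; coefficients indexed by $(i,\lambda)$; $\Lambda_j$ = pairs $(i,\lambda)$ with $\lambda$ of scale $j$. $b^{s,q}_p$: sequences $(c^{(i)}_\lambda)$ with $\big(\big(\sum_{(i,\lambda)\in\Lambda_j}|c^{(i)}_\lambda2^{(s-d/p)j}|^p\big)^{1/p}\big)_{j\ge0}\in\ell^q$ (supremum if $p=\infty$; $d/p=0$ if $p=\infty$), a complete metric vector space for the $\ell^q$ (quasi-)norm. Divergence exponent $\delta_{\mathcal C}(x)$: supremum of $\gamma$ such that there exist $C>0$ and $(i_n,j_n,k_n)$ with $j_n\to\infty$ and $|c^{(i_n)}_{j_n,k_n}\psi^{(i_n)}_{j_n,k_n}(x)|\ge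 C2^{\gamma j_n}$. Dyadic covering property: there exist $C_0>0$ and finitely many triplets $(i_l,j_l,k_l)$ with $j_l\ge1$ such that every $x\in[0,1)^d$ has some $l$ with $|\psi^{(i_l)}(2^{j_l}x-k_l)|\ge C_0$. Prevalence: in a complete metric vector space $E$, a Borel set $A$ is Haar-null if there is a compactly supported Borel probability measure $\mu$ with $\mu(x+A)=0$ for all $x\in E$; a set is Haar-null if contained in a Haar-null Borel set; its complement is then called prevalent. *)

theory Defs
  imports "HOL-Analysis.Analysis" "HOL-Library.Function_Algebras" "HOL-Library.Equipollence"
begin

text \<open>Wavelet coefficient sequences: c i j k, with i in the finite index type 'i
 (the N wavelets), scale j :: nat, position k :: int^'d (the dyadic cube of scale j at k).\<close>

type_synonym ('i, 'd) coeffs = "'i \<Rightarrow> nat \<Rightarrow> int ^ 'd \<Rightarrow> complex"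

definition ivec :: "int ^ 'd \<Rightarrow> real ^ 'd" where
  "ivec k = (\<chi> m. real_of_int (k $ m))"

definition wav :: "('i \<Rightarrow> real ^ 'd \<Rightarrow> complex) \<Rightarrow> 'i \<Rightarrow> nat \<Rightarrow> int ^ 'd \<Rightarrow> real ^ 'd \<Rightarrow> complex" where
  "wav \<psi> i j k x = \<psi> i ((2 ^ j) *\<^sub>R x - ivec k)"

definition dp :: "'d::finite itself \<Rightarrow> ereal \<Rightarrow> real" where
  "dp _ p = (if p = \<infinity> then 0 else real CARD('d) / real_of_ereal p)"

text \<open>x powr r in ennreal (for r > 0), with \<infinity> powr r = \<infinity>\<close>
definition epow :: "ennreal \<Rightarrow> real \<Rightarrow> ennreal" where
  "epow x r = (if x = (top::ennreal) then (top::ennreal) else ennreal (enn2real x powr r))"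

definition level_norm :: "real \<Rightarrow> ereal \<Rightarrow> ('i, 'd::finite) coeffs \<Rightarrow> nat \<Rightarrow> ennreal" where
  "level_norm s p c j =
     (if p = \<infinity> then (SUP ik \<in> UNIV. ennreal (cmod (c (fst ik) j (snd ik)) * 2 powr ((s - dp TYPE('d) p) * real j)))
      else epow (nn_integral (count_space UNIV) (\<lambda>ik. ennreal ((cmod (c (fst ik) j (snd ik)) * 2 powr ((s - dp TYPE('d) p) * real j)) powr real_of_ereal p)))
                (1 / real_of_ereal p))"

definition bnorm :: "real \<Rightarrow> ereal \<Rightarrow> ereal \<Rightarrow> ('i, 'd::finite) coeffs \<Rightarrow> ennreal" where
  "bnorm s p q c =
     (if q = \<infinity> then (SUP j \<in> UNIV. level_norm s p c j)
      else epow (nn_integral (count_space UNIV) (\<lambda>j. epow (level_norm s p c j) (real_of_ereal q))) (1 / real_of_ereal q))"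

definition bspace :: "real \<Rightarrow> ereal \<Rightarrow> ereal \<Rightarrow> ('i, 'd::finite) coeffs set" where
  "bspace s p q = {c. bnorm s p q c < (top::ennreal)}"

definition btop :: "real \<Rightarrow> ereal \<Rightarrow> ereal \<Rightarrow> ('i, 'd::finite) coeffs topology" where
  "btop s p q = topology_generated_by
     {{c' \<in> bspace s p q. bnorm s p q (c' - c) < ennreal r} | c r. c \<in> bspace s p q \<and> r > 0}"

definition borel_sets :: "'a topology \<Rightarrow> 'a set set" where
  "borel_sets T = sigma_sets (topspace T) {U. openin T U}"

definition haar_null_borel :: "'a::ab_group_add topology \<Rightarrow> 'a set \<Rightarrow> bool" where
  "haar_null_borel T A \<longleftrightarrow> A \<in> borel_sets T \<and>
     (\<exists>\<mu>. space \<mu> = topspace T \<and> sets \<mu> = borel_sets T \<and> emeasure \<mu> (space \<mu>) = 1 \<and>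
          (\<exists>K. compactin T K \<and> K \<in> sets \<mu> \<and> emeasure \<mu> K = 1) \<and>
          (\<forall>x \<in> topspace T. emeasure \<mu> ((\<lambda>a. x + a) ` A) = 0))"

definition prevalent :: "'a::ab_group_add topology \<Rightarrow> 'a set \<Rightarrow> bool" where
  "prevalent T S \<longleftrightarrow> (\<exists>A. haar_null_borel T A \<and> topspace T - S \<subseteq> A)"

definition residual :: "'a topology \<Rightarrow> 'a set \<Rightarrow> bool" where
  "residual T S \<longleftrightarrow> (\<exists>U :: nat \<Rightarrow> 'a set. (\<forall>n. openin T (U n) \<and> T closure_of (U n) = topspace T)
                        \<and> (\<Inter>n. U n) \<subseteq> S)"

definition cscale :: "complex \<Rightarrow> ('i, 'd) coeffs \<Rightarrow> ('i, 'd) coeffs" where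
  "cscale a c = (\<lambda>i j k. a * c i j k)"

definition hamel_basis :: "('i, 'd) coeffs set \<Rightarrow> ('i, 'd) coeffs set \<Rightarrow> bool" where
  "hamel_basis V H \<longleftrightarrow> H \<subseteq> V \<and> \<not> module.dependent cscale H \<and> module.span cscale H = V"

definition maximal_lineable :: "('i, 'd) coeffs set \<Rightarrow> ('i, 'd) coeffs set \<Rightarrow> bool" where
  "maximal_lineable E S \<longleftrightarrow> (\<exists>V H HE. module.subspace cscale V \<and> V \<subseteq> S \<union> {0} \<and>
      hamel_basis V H \<and> hamel_basis E HE \<and> H \<approx> HE)"

definition div_exp :: "('i \<Rightarrow> real ^ 'd \<Rightarrow> complex) \<Rightarrow> ('i, 'd) coeffs \<Rightarrow> real ^ 'd \<Rightarrow> ereal" where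
  "div_exp \<psi> c x = Sup (ereal ` {\<gamma>. \<exists>C > 0. \<exists>(ii :: nat \<Rightarrow> 'i) (js :: nat \<Rightarrow> nat) (ks :: nat \<Rightarrow> int ^ 'd).
      filterlim js at_top sequentially \<and>
      (\<forall>n. cmod (c (ii n) (js n) (ks n) * wav \<psi> (ii n) (js n) (ks n) x) \<ge> C * 2 powr (\<gamma> * real (js n)))})"

definition unit_cube :: "(real ^ 'd) set" where
  "unit_cube = {x. \<forall>m. 0 \<le> x $ m \<and> x $ m < 1}"

definition dyadic_covering :: "('i \<Rightarrow> real ^ 'd \<Rightarrow> complex) \<Rightarrow> bool" where
  "dyadic_covering \<psi> \<longleftrightarrow> (\<exists>C0 > 0. \<exists>L :: ('i \<times> nat \<times> (int ^ 'd)) set. finite L \<and>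
      (\<forall>(i, j, k) \<in> L. j \<ge> 1) \<and>
      (\<forall>x \<in> unit_cube. \<exists>(i, j, k) \<in> L. cmod (wav \<psi> i j k x) \<ge> C0))"

definition bounded_fast_decay :: "(real ^ 'd \<Rightarrow> complex) \<Rightarrow> bool" where
  "bounded_fast_decay f \<longleftrightarrow> (\<exists>B. \<forall>x. cmod (f x) \<le> B) \<and>
     (\<forall>M::real. \<exists>C. \<forall>x. cmod (f x) \<le> C * (1 + norm x) powr (- M))"

end

theory Submission
  imports Defs "HOL-Real_Asymp.Real_Asymp"
begin

lemma powr_subadd:
  fixes a b r :: real
  assumes "a \<ge> 0" "b \<ge> 0" "0 < r" "r \<le> 1"
  shows "(a + b) powr r \<le> a powr r + b powr r"
proof (cases "a + b = 0")
  case True then show ?thesis using assms by auto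
next
  case False
  then have ab: "a + b > 0" using assms by linarith
  define t where "t = a / (a + b)"
  have t01: "0 \<le> t" "t \<le> 1" using assms ab by (auto simp: t_def field_simps)
  have 1: "t \<le> t powr r"
    using powr_mono'[of r 1 t] t01 assms by simp
  have 2: "1 - t \<le> (1 - t) powr r"
    using powr_mono'[of r 1 "1 - t"] t01 assms by simp
  have "a = (a+b) * t" "b = (a+b) * (1 - t)" using ab by (auto simp: t_def field_simps)
  then have "a powr r + b powr r = (a+b) powr r * (t powr r + (1-t) powr r)"
    using ab t01 by (metis distrib_left powr_mult less_imp_le diff_ge_0_iff_ge)
  also have "\<dots> \<ge> (a+b) powr r * 1" using 1 2 by (intro mult_left_mono) auto
  finally show ?thesis by simp
qed

lemma epow_ennreal: "x \<ge> 0 \<Longrightarrow> epow (ennreal x) r = ennreal (x powr r)"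
  by (simp add: epow_def)

lemma epow_top [simp]: "epow top r = top"
  by (simp add: epow_def)

lemma epow_0 [simp]: "epow 0 r = 0"
  by (simp add: epow_def)

lemma epow_cases: obtains (top) "x = top" | (fin) y where "y \<ge> 0" "x = ennreal y"
  by (cases x) auto

lemma epow_mono: assumes "r > 0" "x \<le> y" shows "epow x r \<le> epow y r"
proof (cases y rule: epow_cases)
  case top then show ?thesis by simp
next
  case (fin b)
  then obtain a where a: "a \<ge> 0" "x = ennreal a" "a \<le> b"
    using assms by (cases x rule: epow_cases) (auto simp: ennreal_le_iff2 top_unique)
  then show ?thesis using fin assms by (simp add: epow_ennreal powr_mono2)
qed

lemma epow_epow: "epow (epow x r) r' = epow x (r * r')"
  by (cases x rule: epow_cases) (auto simp: epow_ennreal powr_powr)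

lemma epow_1 [simp]: "epow x 1 = x"
  by (cases x rule: epow_cases) (auto simp: epow_ennreal)

lemma epow_inv: "r \<noteq> 0 \<Longrightarrow> epow (epow x r) (1 / r) = x"
  by (simp add: epow_epow)

lemma epow_pos: assumes "r > 0" "x > 0" shows "epow x r > 0"
  using assms by (cases x rule: epow_cases) (auto simp: epow_ennreal)

lemma epow_mult: assumes "r > 0" shows "epow (x * y) r = epow x r * epow y r"
proof (cases x rule: epow_cases)
  case top
  then show ?thesis
  proof (cases "y = 0")
    case False then have "epow y r > 0" using assms epow_pos by (simp add: zero_less_iff_neq_zero)
    then show ?thesis using top False by (simp add: ennreal_mult_top ennreal_top_mult)
  qed simp
next
  case (fin a)
  then show ?thesis
  proof (cases y rule: epow_cases)
    case top then show ?thesis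
    proof (cases "a = 0")
      case False then have "epow x r > 0" using fin assms epow_pos by (auto simp: epow_ennreal)
      then show ?thesis using top fin False by (simp add: ennreal_mult_top ennreal_top_mult)
    qed (simp add: fin)
  next
    case (fin b)
    then show ?thesis using \<open>x = ennreal a\<close> \<open>a \<ge> 0\<close>
      by (simp add: epow_ennreal ennreal_mult[symmetric] powr_mult)
  qed
qed

lemma epow_add_le: assumes "0 < r" "r \<le> 1" shows "epow (x + y) r \<le> epow x r + epow y r"
proof (cases x rule: epow_cases)
  case top then show ?thesis by simp
next
  case (fin a)
  then show ?thesis
  proof (cases y rule: epow_cases)
    case (fin b)
    then show ?thesis using \<open>x = ennreal a\<close> \<open>a \<ge> 0\<close> assms
      by (simp add: epow_ennreal ennreal_plus[symmetric] powr_subadd del: ennreal_plus)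
  qed simp
qed

lemma epow_less_top_iff: "epow x r < top \<longleftrightarrow> x < top"
  by (cases x rule: epow_cases) (auto simp: epow_ennreal)

lemma epow_le_iff: assumes "r > 0" shows "epow x r \<le> epow y r \<longleftrightarrow> x \<le> y"
  using epow_mono[OF assms] epow_mono[of "1/r" "epow x r" "epow y r"] assms
  by (auto simp: epow_inv)

lemma epow_less_iff: assumes "r > 0" shows "epow x r < epow y r \<longleftrightarrow> x < y"
  using epow_le_iff[OF assms, of y x] by (simp add: not_le[symmetric])

lemma convex_powr_le:
  fixes u v t P :: real
  assumes "0 \<le> t" "t \<le> 1" "u \<ge> 0" "v \<ge> 0" "P \<ge> 1"
  shows "((1 - t) * u + t * v) powr P \<le> (1 - t) * u powr P + t * v powr P"
proof -
  consider "u > 0" "v > 0" | "u = 0" | "v = 0" using assms by linarith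
  then show ?thesis
  proof cases
    case 1
    then show ?thesis using convex_onD[OF powr_convex[OF assms(5)], of t u v] assms by simp
  next
    case 2
    have "(t * v) powr P = t powr P * v powr P" using assms by (simp add: powr_mult)
    also have "\<dots> \<le> t * v powr P"
      using powr_mono'[of 1 P t] assms by (intro mult_right_mono) auto
    finally show ?thesis using 2 assms by simp
  next
    case 3
    have "((1-t) * u) powr P = (1-t) powr P * u powr P" using assms by (simp add: powr_mult)
    also have "\<dots> \<le> (1-t) * u powr P"
      using powr_mono'[of 1 P "1-t"] assms by (intro mult_right_mono) auto
    finally show ?thesis using 3 assms by simp
  qed
qed

definition Lp :: "ereal \<Rightarrow> ('a \<Rightarrow> ennreal) \<Rightarrow> ennreal" where
  "Lp p f = (if p = \<infinity> then (SUP x\<in>UNIV. f x)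
     else epow (\<integral>\<^sup>+x. epow (f x) (real_of_ereal p) \<partial>count_space UNIV) (1 / real_of_ereal p))"

lemma ereal_pos_cases:
  assumes "p > (0::ereal)"
  obtains "p = \<infinity>" | P where "P > 0" "p = ereal P"
  using assms by (cases p) auto

lemma Lp_mono:
  assumes "p > 0" "\<And>x. f x \<le> g x"
  shows "Lp p f \<le> Lp p g"
  using assms(1)
proof (cases rule: ereal_pos_cases)
  case 1 then show ?thesis using assms by (auto simp: Lp_def intro: SUP_mono)
next
  case (2 P)
  then show ?thesis using assms
    by (auto simp: Lp_def intro!: epow_mono nn_integral_mono)
qed

lemma nn_integral_count_space_ge: "f x \<le> (\<integral>\<^sup>+y. f y \<partial>count_space UNIV)"
proof -
  have "f x = (\<integral>\<^sup>+y. f y * indicator {x} y \<partial>count_space UNIV)" by simp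
  also have "\<dots> \<le> (\<integral>\<^sup>+y. f y \<partial>count_space UNIV)"
    by (intro nn_integral_mono) (auto simp: indicator_def)
  finally show ?thesis .
qed

lemma Lp_ge:
  assumes "p > 0"
  shows "f x \<le> Lp p f"
  using assms
proof (cases rule: ereal_pos_cases)
  case 1 then show ?thesis by (auto simp: Lp_def intro: SUP_upper)
next
  case (2 P)
  have "f x = epow (epow (f x) P) (1/P)" using 2 by (simp add: epow_inv)
  also have "\<dots> \<le> Lp p f" using 2
    by (auto simp: Lp_def intro!: epow_mono nn_integral_count_space_ge)
  finally show ?thesis .
qed

lemma Lp_cmult:
  assumes "p > 0" "a \<ge> 0"
  shows "Lp p (\<lambda>x. ennreal a * f x) = ennreal a * Lp p f"
  using assms(1)
proof (cases rule: ereal_pos_cases)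
  case 1 then show ?thesis by (simp add: Lp_def SUP_mult_left_ennreal)
next
  case (2 P)
  have "Lp p (\<lambda>x. ennreal a * f x) =
      epow (\<integral>\<^sup>+x. epow (ennreal a) P * epow (f x) P \<partial>count_space UNIV) (1/P)"
    using 2 by (simp add: Lp_def epow_mult)
  also have "\<dots> = epow (epow (ennreal a) P * (\<integral>\<^sup>+x. epow (f x) P \<partial>count_space UNIV)) (1/P)"
    by (subst nn_integral_cmult) auto
  also have "\<dots> = ennreal a * Lp p f"
    using 2 by (simp add: Lp_def epow_mult epow_inv)
  finally show ?thesis .
qed

lemma Lp_zero: "p > 0 \<Longrightarrow> Lp p (\<lambda>x. 0) = 0"
  using Lp_cmult[of p 0 "\<lambda>x. 0"] by simp

lemma SUP_epow:
  assumes "r > 0"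
  shows "(SUP x\<in>A. epow (f x) r) = epow (SUP x\<in>A. f x) r"
proof (rule antisym)
  show "(SUP x\<in>A. epow (f x) r) \<le> epow (SUP x\<in>A. f x) r"
    by (intro SUP_least epow_mono assms SUP_upper)
  have "(SUP x\<in>A. f x) \<le> epow (SUP x\<in>A. epow (f x) r) (1/r)"
  proof (intro SUP_least)
    fix x assume "x \<in> A"
    have "f x = epow (epow (f x) r) (1/r)" using assms by (simp add: epow_inv)
    also have "\<dots> \<le> epow (SUP x\<in>A. epow (f x) r) (1/r)"
      using assms \<open>x \<in> A\<close> by (intro epow_mono SUP_upper) auto
    finally show "f x \<le> \<dots>" .
  qed
  then have "epow (SUP x\<in>A. f x) r \<le> epow (epow (SUP x\<in>A. epow (f x) r) (1/r)) r"
    using assms by (rule epow_mono[rotated])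
  also have "\<dots> = (SUP x\<in>A. epow (f x) r)" using assms by (simp add: epow_epow)
  finally show "epow (SUP x\<in>A. f x) r \<le> (SUP x\<in>A. epow (f x) r)" .
qed

lemma Lp_epow:
  assumes "r > 0" "p > 0"
  shows "Lp (p / ereal r) (\<lambda>x. epow (f x) r) = epow (Lp p f) r"
  using assms(2)
proof (cases rule: ereal_pos_cases)
  case 1
  then show ?thesis using assms by (simp add: Lp_def SUP_epow)
next
  case (2 P)
  have pr: "p / ereal r = ereal (P / r)" "p / ereal r \<noteq> \<infinity>" using 2 assms by auto
  have "Lp (p / ereal r) (\<lambda>x. epow (f x) r) =
     epow (\<integral>\<^sup>+x. epow (f x) P \<partial>count_space UNIV) (r / P)"
    using 2 assms unfolding Lp_def pr by (simp add: epow_epow)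
  also have "\<dots> = epow (Lp p f) r" using 2 by (simp add: Lp_def epow_epow)
  finally show ?thesis .
qed

lemma pointwise_mink:
  fixes F G a b P :: real
  assumes "F \<ge> 0" "G \<ge> 0" "a > 0" "b > 0" "P \<ge> 1"
  shows "(F + G) powr P \<le> ((a+b) powr P * (a/(a+b)) / a powr P) * F powr P
                            + ((a+b) powr P * (b/(a+b)) / b powr P) * G powr P"
proof -
  define t where "t = b / (a+b)"
  have ab: "a + b > 0" using assms by simp
  have t0: "0 \<le> t" using assms by (simp add: t_def)
  have t1: "t \<le> 1" using assms by (simp add: t_def)
  have t2: "1 - t = a / (a+b)" using ab by (simp add: t_def field_simps)
  have eq: "(1 - t) * (F/a) + t * (G/b) = (F + G) / (a+b)"
  proof -
    have e1: "(1-t)*(F/a) = F/(a+b)" using assms by (simp add: t2)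
    have e2: "t*(G/b) = G/(a+b)" using assms by (simp add: t_def)
    show ?thesis by (simp only: e1 e2 add_divide_distrib)
  qed
  have "((F + G) / (a+b)) powr P \<le> (1 - t) * (F/a) powr P + t * (G/b) powr P"
    using convex_powr_le[of t "F/a" "G/b" P] assms t0 t1 eq by simp
  also have "\<dots> = (a/(a+b)) * (F powr P / a powr P) + (b/(a+b)) * (G powr P / b powr P)"
    using assms unfolding t2 by (simp add: powr_divide t_def)
  finally have X: "((F + G) / (a+b)) powr P \<le> (a/(a+b)) * (F powr P / a powr P) + (b/(a+b)) * (G powr P / b powr P)" .
  have "(F + G) powr P = (a+b) powr P * ((F + G) / (a+b)) powr P"
    using assms ab by (simp add: powr_divide)
  also have "\<dots> \<le> (a+b) powr P * ((a/(a+b)) * (F powr P / a powr P) + (b/(a+b)) * (G powr P / b powr P))"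
    by (rule mult_left_mono[OF X]) simp
  also have "\<dots> = ((a+b) powr P * (a/(a+b)) / a powr P) * F powr P
                            + ((a+b) powr P * (b/(a+b)) / b powr P) * G powr P"
    by (simp add: distrib_left mult_ac)
  finally show ?thesis .
qed

lemma Lp_mink:
  assumes "p \<ge> 1"
  shows "Lp p (\<lambda>x. f x + g x) \<le> Lp p f + Lp p g"
proof -
  have "p > 0" using assms order_less_le_trans[of 0 1 p] by simp
  then show ?thesis
  proof (cases rule: ereal_pos_cases)
    case 1
    then show ?thesis
      by (auto simp: Lp_def intro!: SUP_least add_mono SUP_upper)
  next
    case (2 P)
    have P1: "P \<ge> 1" using 2 assms by auto
    define A where "A = (\<integral>\<^sup>+x. epow (f x) P \<partial>count_space UNIV)"
    define B where "B = (\<integral>\<^sup>+x. epow (g x) P \<partial>count_space UNIV)"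
    have LA: "Lp p f = epow A (1/P)" "Lp p g = epow B (1/P)"
      "Lp p (\<lambda>x. f x + g x) = epow (\<integral>\<^sup>+x. epow (f x + g x) P \<partial>count_space UNIV) (1/P)"
      using 2 by (auto simp: Lp_def A_def B_def)
    show ?thesis
    proof (cases "A = top \<or> B = top")
      case True then show ?thesis using LA by auto
    next
      case False
      then have Af: "A < top" "B < top" by (auto simp: top.not_eq_extremum)
      have ff: "f x < top" "g x < top" for x
      proof -
        have "epow (f x) P < top" using nn_integral_count_space_ge[of "\<lambda>x. epow (f x) P" x] Af
          unfolding A_def by (meson le_less_trans)
        moreover have "epow (g x) P < top" using nn_integral_count_space_ge[of "\<lambda>x. epow (g x) P" x] Af
          unfolding B_def by (meson le_less_trans)
        ultimately show "f x < top" "g x < top" by (auto simp: epow_less_top_iff)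
      qed
      define F where "F x = enn2real (f x)" for x
      define G where "G x = enn2real (g x)" for x
      have FG: "f x = ennreal (F x)" "g x = ennreal (G x)" "F x \<ge> 0" "G x \<ge> 0" for x
        using ff[of x] by (auto simp: F_def G_def less_top)
      obtain A' B' where AB: "A = ennreal A'" "B = ennreal B'" "A' \<ge> 0" "B' \<ge> 0"
        using Af by (cases A rule: epow_cases; cases B rule: epow_cases) auto
      have AF: "A = (\<integral>\<^sup>+x. ennreal (F x powr P) \<partial>count_space UNIV)"
        unfolding A_def by (simp add: FG epow_ennreal)
      have BG: "B = (\<integral>\<^sup>+x. ennreal (G x powr P) \<partial>count_space UNIV)"
        unfolding B_def by (simp add: FG epow_ennreal)
      define a where "a = A' powr (1/P)"
      define b where "b = B' powr (1/P)"
      have La: "Lp p f = ennreal a" "Lp p g = ennreal b" using LA AB by (auto simp: a_def b_def epow_ennreal)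
      have aP: "a powr P = A'" "b powr P = B'" using AB 2 by (auto simp: a_def b_def powr_powr)
      have zero_case: "h = (\<lambda>x. 0)" if "(\<integral>\<^sup>+x. ennreal (H x powr P) \<partial>count_space UNIV) = 0"
          "\<And>x. h x = ennreal (H x)" "\<And>x. H x \<ge> 0" for h H
      proof -
        have "\<forall>x. ennreal (H x powr P) = 0" using that(1)
          by (subst (asm) nn_integral_0_iff_AE) (auto simp: AE_count_space)
        then show ?thesis using that(2,3) by (auto simp: fun_eq_iff)
      qed
      have "a \<ge> 0" "b \<ge> 0" by (simp_all add: a_def b_def)
      then consider "a = 0" | "b = 0" | "a > 0" "b > 0"
        by (cases "a = 0"; cases "b = 0") auto
      then show ?thesis
      proof cases
        case 1
        then have "A' = 0" using aP 2 by auto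
        then have "f = (\<lambda>x. 0)" using zero_case[of F f] AF AB FG by auto
        then show ?thesis by simp
      next
        case 2
        then have "B' = 0" using aP 2 by auto
        then have "g = (\<lambda>x. 0)" using zero_case[of G g] BG AB FG by auto
        then show ?thesis by simp
      next
        case 3
        define K1 where "K1 = (a+b) powr P * (a/(a+b)) / a powr P"
        define K2 where "K2 = (a+b) powr P * (b/(a+b)) / b powr P"
        have K: "K1 \<ge> 0" "K2 \<ge> 0" using 3 by (auto simp: K1_def K2_def)
        have "(\<integral>\<^sup>+x. epow (f x + g x) P \<partial>count_space UNIV)
            = (\<integral>\<^sup>+x. ennreal ((F x + G x) powr P) \<partial>count_space UNIV)"
          by (simp add: FG epow_ennreal ennreal_plus[symmetric] del: ennreal_plus)
        also have "\<dots> \<le> (\<integral>\<^sup>+x. ennreal K1 * ennreal (F x powr P) + ennreal K2 * ennreal (G x powr P) \<partial>count_space UNIV)"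
          using pointwise_mink[of "F _" "G _" a b P] FG 3 P1 K
          by (intro nn_integral_mono) (simp add: ennreal_mult[symmetric] ennreal_plus[symmetric] K1_def K2_def del: ennreal_plus)
        also have "\<dots> = ennreal K1 * A + ennreal K2 * B"
          by (simp add: nn_integral_add nn_integral_cmult AF BG)
        also have "\<dots> = ennreal (K1 * A' + K2 * B')"
          using K AB by (simp add: ennreal_mult)
        also have "K1 * A' + K2 * B' = (a + b) powr P"
        proof -
          have "a powr P > 0" "b powr P > 0" using 3 by auto
          then have "K1 * A' = (a+b) powr P * (a/(a+b))" "K2 * B' = (a+b) powr P * (b/(a+b))"
            unfolding aP[symmetric] K1_def K2_def by auto
          moreover have "(a+b) powr P * (a/(a+b)) + (a+b) powr P * (b/(a+b)) = (a+b) powr P * ((a+b)/(a+b))"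
            by (simp only: distrib_left[symmetric] add_divide_distrib[symmetric])
          ultimately show ?thesis using 3 by simp
        qed
        finally have "Lp p (\<lambda>x. f x + g x) \<le> epow (ennreal ((a + b) powr P)) (1/P)"
          using LA 2 by (auto intro: epow_mono)
        also have "\<dots> = ennreal (a + b)" using 3 2 by (simp add: epow_ennreal powr_powr)
        finally show ?thesis using La 3 by (simp add: ennreal_plus[symmetric] del: ennreal_plus)
      qed
    qed
  qed
qed

lemma Lp_rtriangle:
  assumes "0 < r" "r \<le> 1" "ereal r \<le> p"
  shows "epow (Lp p (\<lambda>x. f x + g x)) r \<le> epow (Lp p f) r + epow (Lp p g) r"
proof -
  have p0: "p > 0" using assms(1,3) order_less_le_trans[of 0 "ereal r" p] by simp
  have pr: "p / ereal r \<ge> 1"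
  proof (cases p)
    case (real P)
    then have "r \<le> P" using assms by simp
    then have "1 \<le> P / r" using assms by simp
    then show ?thesis using real assms by simp
  next
    case PInf then show ?thesis using assms by simp
  next
    case MInf then show ?thesis using p0 by simp
  qed
  have pr0: "p / ereal r > 0" using pr order_less_le_trans[of 0 1 "p / ereal r"] by simp
  have "epow (Lp p (\<lambda>x. f x + g x)) r = Lp (p / ereal r) (\<lambda>x. epow (f x + g x) r)"
    by (rule Lp_epow[OF assms(1) p0, symmetric])
  also have "\<dots> \<le> Lp (p / ereal r) (\<lambda>x. epow (f x) r + epow (g x) r)"
    using assms pr0 by (intro Lp_mono epow_add_le) auto
  also have "\<dots> \<le> Lp (p / ereal r) (\<lambda>x. epow (f x) r) + Lp (p / ereal r) (\<lambda>x. epow (g x) r)"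
    using pr by (rule Lp_mink)
  also have "\<dots> = epow (Lp p f) r + epow (Lp p g) r"
    by (simp only: Lp_epow[OF assms(1) p0])
  finally show ?thesis .
qed

definition wt :: "'d::finite itself \<Rightarrow> real \<Rightarrow> ereal \<Rightarrow> nat \<Rightarrow> real" where
  "wt T s p j = 2 powr ((s - dp T p) * real j)"

lemma wt_pos [simp]: "wt T s p j > 0" by (simp add: wt_def)

definition lev :: "real \<Rightarrow> ereal \<Rightarrow> ('i,'d::finite) coeffs \<Rightarrow> nat \<Rightarrow> ('i \<times> (int^'d)) \<Rightarrow> ennreal" where
  "lev s p c j ik = ennreal (cmod (c (fst ik) j (snd ik)) * wt TYPE('d) s p j)"

lemma level_norm_Lp:
  assumes "p > 0"
  shows "level_norm s p c j = Lp p (lev s p c j)"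
  using assms
proof (cases rule: ereal_pos_cases)
  case 1 then show ?thesis by (simp add: level_norm_def Lp_def lev_def wt_def)
next
  case (2 P) then show ?thesis by (simp add: level_norm_def Lp_def lev_def wt_def epow_ennreal)
qed

lemma bnorm_Lp: "bnorm s p q c = Lp q (level_norm s p c)"
  by (simp add: bnorm_def Lp_def)

lemma coord_le_bnorm:
  assumes "p > 0" "q > 0"
  shows "ennreal (cmod (c i j k) * wt TYPE('d) s p j) \<le> bnorm s p q (c :: ('i,'d::finite) coeffs)"
proof -
  have "ennreal (cmod (c i j k) * wt TYPE('d) s p j) = lev s p c j (i, k)" by (simp add: lev_def)
  also have "\<dots> \<le> level_norm s p c j" using assms by (simp add: level_norm_Lp Lp_ge)
  also have "\<dots> \<le> bnorm s p q c" using assms by (simp add: bnorm_Lp Lp_ge)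
  finally show ?thesis .
qed

definition rr :: "ereal \<Rightarrow> ereal \<Rightarrow> real" where
  "rr p q = min 1 (min (if p = \<infinity> then 1 else real_of_ereal p) (if q = \<infinity> then 1 else real_of_ereal q))"

lemma rr_props:
  assumes "p > 0" "q > 0"
  shows "0 < rr p q" "rr p q \<le> 1" "ereal (rr p q) \<le> p" "ereal (rr p q) \<le> q"
proof -
  have a: "0 < (if p = \<infinity> then 1 else real_of_ereal p)" "ereal (if p = \<infinity> then 1 else real_of_ereal p) \<le> p"
    using assms(1) by (cases rule: ereal_pos_cases; simp)+
  have b: "0 < (if q = \<infinity> then 1 else real_of_ereal q)" "ereal (if q = \<infinity> then 1 else real_of_ereal q) \<le> q"
    using assms(2) by (cases rule: ereal_pos_cases; simp)+
  show "0 < rr p q" "rr p q \<le> 1" using a b by (auto simp: rr_def)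
  show "ereal (rr p q) \<le> p" using a(2) unfolding rr_def
    by (meson ereal_less_eq(3) min.cobounded1 min.coboundedI2 order_trans)
  show "ereal (rr p q) \<le> q" using b(2) unfolding rr_def
    by (meson ereal_less_eq(3) min.cobounded2 min.coboundedI2 order_trans)
qed

lemma bnorm_rtriangle:
  assumes "p > 0" "q > 0"
  shows "epow (bnorm s p q (a + b)) (rr p q) \<le> epow (bnorm s p q a) (rr p q) + epow (bnorm s p q (b :: ('i,'d::finite) coeffs)) (rr p q)"
proof -
  define r where "r = rr p q"
  note rp = rr_props[OF assms, folded r_def]
  define u where "u j = epow (level_norm s p a j) r" for j
  define v where "v j = epow (level_norm s p b j) r" for j
  have lev_le: "level_norm s p (a + b) j \<le> epow (u j + v j) (1/r)" for j
  proof -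
    have "level_norm s p (a + b) j \<le> Lp p (\<lambda>ik. lev s p a j ik + lev s p b j ik)"
      unfolding level_norm_Lp[OF assms(1)]
    proof (intro Lp_mono assms)
      fix ik
      define x where "x = a (fst ik) j (snd ik)"
      define y where "y = b (fst ik) j (snd ik)"
      define w where "w = wt TYPE('d) s p j"
      have w: "w > 0" by (simp add: w_def)
      have "ennreal (cmod (x + y) * w) \<le> ennreal (cmod x * w + cmod y * w)"
        by (rule ennreal_leI) (metis distrib_right mult_right_mono norm_triangle_ineq w less_imp_le)
      also have "\<dots> = ennreal (cmod x * w) + ennreal (cmod y * w)"
        by (rule ennreal_plus) (use w in auto)
      finally show "lev s p (a + b) j ik \<le> lev s p a j ik + lev s p b j ik"
        by (simp add: lev_def x_def y_def w_def)
    qed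
    then have "epow (level_norm s p (a + b) j) r \<le> epow (Lp p (\<lambda>ik. lev s p a j ik + lev s p b j ik)) r"
      using rp by (intro epow_mono) auto
    also have "\<dots> \<le> u j + v j"
      unfolding u_def v_def level_norm_Lp[OF assms(1)] using rp by (intro Lp_rtriangle) auto
    finally have "epow (level_norm s p (a + b) j) r \<le> u j + v j" .
    then have "epow (epow (level_norm s p (a + b) j) r) (1/r) \<le> epow (u j + v j) (1/r)"
      using rp by (intro epow_mono) auto
    then show ?thesis using rp by (simp add: epow_inv)
  qed
  have qr: "q / ereal r \<ge> 1"
  proof (cases q)
    case (real Q)
    then have "r \<le> Q" using rp by simp
    then have "1 \<le> Q / r" using rp by simp
    then show ?thesis using real rp by simp
  next
    case PInf then show ?thesis using rp by simp
  next
    case MInf then show ?thesis using assms by simp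
  qed
  have "epow (bnorm s p q (a + b)) r \<le> epow (Lp q (\<lambda>j. epow (u j + v j) (1/r))) r"
    unfolding bnorm_Lp using rp assms by (intro epow_mono Lp_mono lev_le) auto
  also have "\<dots> = Lp (q / ereal r) (\<lambda>j. epow (epow (u j + v j) (1/r)) r)"
    using Lp_epow[of r q "\<lambda>j. epow (u j + v j) (1/r)"] rp assms by simp
  also have "\<dots> = Lp (q / ereal r) (\<lambda>j. u j + v j)"
    using rp by (simp add: epow_epow)
  also have "\<dots> \<le> Lp (q / ereal r) u + Lp (q / ereal r) v"
    using qr by (rule Lp_mink)
  also have "\<dots> = epow (bnorm s p q a) r + epow (bnorm s p q b) r"
    unfolding u_def v_def bnorm_Lp by (simp only: Lp_epow[OF rp(1) assms(2)])
  finally show ?thesis unfolding r_def .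
qed

lemma bnorm_cscale:
  assumes "p > 0" "q > 0"
  shows "bnorm s p q (cscale t c) = ennreal (cmod t) * bnorm s p q (c :: ('i,'d::finite) coeffs)"
proof -
  have "level_norm s p (cscale t c) = (\<lambda>j. ennreal (cmod t) * level_norm s p c j)"
    unfolding fun_eq_iff
  proof
    fix j
    have "lev s p (cscale t c) j = (\<lambda>ik. ennreal (cmod t) * lev s p c j ik)"
      by (auto simp: fun_eq_iff lev_def cscale_def norm_mult ennreal_mult mult.assoc wt_pos[THEN less_imp_le])
    then show "level_norm s p (cscale t c) j = ennreal (cmod t) * level_norm s p c j" using assms by (simp add: level_norm_Lp Lp_cmult)
  qed
  then show ?thesis using assms by (simp add: bnorm_Lp Lp_cmult)
qed

lemma cscale_minus: "cscale (-1) c = - c"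
  by (simp add: cscale_def fun_eq_iff)

lemma bnorm_uminus:
  assumes "p > 0" "q > 0"
  shows "bnorm s p q (- c) = bnorm s p q (c :: ('i,'d::finite) coeffs)"
  using bnorm_cscale[OF assms, of s "-1" c] by (simp add: cscale_minus)

lemma bnorm_zero:
  assumes "p > 0" "q > 0"
  shows "bnorm s p q (0 :: ('i,'d::finite) coeffs) = 0"
  using bnorm_cscale[OF assms, of s 0 0] by (simp add: cscale_def zero_fun_def)

lemma bspace_add:
  assumes "p > 0" "q > 0" "a \<in> bspace s p q" "b \<in> bspace s p q"
  shows "a + b \<in> bspace s p q"
proof -
  have "epow (bnorm s p q a) (rr p q) + epow (bnorm s p q b) (rr p q) < top"
    using assms(3,4) by (simp add: bspace_def epow_less_top_iff)
  then have "epow (bnorm s p q (a + b)) (rr p q) < top"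
    using bnorm_rtriangle[OF assms(1,2), of s a b] by (rule le_less_trans[rotated])
  then show ?thesis by (simp add: bspace_def epow_less_top_iff)
qed

lemma bspace_cscale:
  assumes "p > 0" "q > 0" "a \<in> bspace s p q"
  shows "cscale t a \<in> bspace s p q"
  using assms by (simp add: bspace_def bnorm_cscale ennreal_mult_less_top)

lemma bspace_uminus:
  assumes "p > 0" "q > 0" "a \<in> bspace s p q"
  shows "- a \<in> bspace s p q"
  using assms by (simp add: bspace_def bnorm_uminus)

lemma bspace_diff:
  assumes "p > 0" "q > 0" "a \<in> bspace s p q" "b \<in> bspace s p q"
  shows "a - b \<in> bspace s p q"
  using bspace_add[OF assms(1,2,3) bspace_uminus[OF assms(1,2,4)]] by simp

lemma bspace_zero:
  assumes "p > 0" "q > 0"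
  shows "0 \<in> bspace s p q"
  using assms by (simp add: bspace_def bnorm_zero)

locale wset =
  fixes \<psi> :: "'i::finite \<Rightarrow> real ^ 'd::finite \<Rightarrow> complex"
    and s :: real and p q :: ereal and x0 :: "real ^ 'd"
  assumes bfd: "\<And>i. bounded_fast_decay (\<psi> i)"
    and dyc: "dyadic_covering \<psi>"
    and p0: "p > 0" and q0: "q > 0"
begin

abbreviation E :: "('i,'d) coeffs set" where "E \<equiv> bspace s p q"
abbreviation BN :: "('i,'d) coeffs \<Rightarrow> ennreal" where "BN \<equiv> bnorm s p q"
definition tgt where "tgt = - s + dp TYPE('d) p"
definition W :: "nat \<Rightarrow> real" where "W j = wt TYPE('d) s p j"

lemma W_pos [simp]: "W j > 0" by (simp add: W_def)
definition psv where "psv i j k = wav \<psi> i j k x0"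

lemma W_eq: "W j = 2 powr (- tgt * real j)"
  by (simp add: W_def wt_def tgt_def)

definition dset :: "('i,'d) coeffs \<Rightarrow> real \<Rightarrow> bool" where
  "dset c \<gamma> \<longleftrightarrow> (\<exists>C>0. \<forall>J. \<exists>i j k. J \<le> j \<and> C * 2 powr (\<gamma> * real j) \<le> cmod (c i j k * psv i j k))"

lemma div_exp_eq: "div_exp \<psi> c x0 = Sup (ereal ` {\<gamma>. dset c \<gamma>})"
proof -
  have "(\<exists>C > 0. \<exists>(ii :: nat \<Rightarrow> 'i) (js :: nat \<Rightarrow> nat) (ks :: nat \<Rightarrow> int ^ 'd).
      filterlim js at_top sequentially \<and>
      (\<forall>n. cmod (c (ii n) (js n) (ks n) * wav \<psi> (ii n) (js n) (ks n) x0) \<ge> C * 2 powr (\<gamma> * real (js n))))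
     \<longleftrightarrow> dset c \<gamma>" for \<gamma>
  proof
    assume "\<exists>C > 0. \<exists>(ii :: nat \<Rightarrow> 'i) (js :: nat \<Rightarrow> nat) (ks :: nat \<Rightarrow> int ^ 'd).
      filterlim js at_top sequentially \<and>
      (\<forall>n. cmod (c (ii n) (js n) (ks n) * wav \<psi> (ii n) (js n) (ks n) x0) \<ge> C * 2 powr (\<gamma> * real (js n)))"
    then obtain C ii js ks where H: "C > 0" "filterlim js at_top sequentially"
      "\<And>n. cmod (c (ii n) (js n) (ks n) * wav \<psi> (ii n) (js n) (ks n) x0) \<ge> C * 2 powr (\<gamma> * real (js n))"
      by blast
    show "dset c \<gamma>" unfolding dset_def
    proof (intro exI[of _ C] conjI allI)
      fix J
      obtain n where "js n \<ge> J" using H(2) unfolding filterlim_at_top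
        by (meson eventually_sequentially order_refl)
      then show "\<exists>i j k. J \<le> j \<and> C * 2 powr (\<gamma> * real j) \<le> cmod (c i j k * psv i j k)"
        using H(3)[of n] unfolding psv_def by blast
    qed (use H in auto)
  next
    assume "dset c \<gamma>"
    then obtain C where C: "C > 0" "\<forall>J. \<exists>i j k. J \<le> j \<and> C * 2 powr (\<gamma> * real j) \<le> cmod (c i j k * psv i j k)"
      unfolding dset_def by blast
    have "\<forall>J. \<exists>x::('i \<times> nat \<times> (int^'d)). J \<le> fst (snd x) \<and> C * 2 powr (\<gamma> * real (fst (snd x))) \<le>
        cmod (c (fst x) (fst (snd x)) (snd (snd x)) * psv (fst x) (fst (snd x)) (snd (snd x)))"
    proof
      fix J
      obtain i j k where "J \<le> j" "C * 2 powr (\<gamma> * real j) \<le> cmod (c i j k * psv i j k)" using C by blast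
      then show "\<exists>x::('i \<times> nat \<times> (int^'d)). J \<le> fst (snd x) \<and> C * 2 powr (\<gamma> * real (fst (snd x))) \<le>
        cmod (c (fst x) (fst (snd x)) (snd (snd x)) * psv (fst x) (fst (snd x)) (snd (snd x)))"
        by (intro exI[of _ "(i,j,k)"]) simp
    qed
    then have "\<exists>f. \<forall>J. J \<le> fst (snd (f J)) \<and> C * 2 powr (\<gamma> * real (fst (snd (f J)))) \<le>
        cmod (c (fst (f J)) (fst (snd (f J))) (snd (snd (f J))) * psv (fst (f J)) (fst (snd (f J))) (snd (snd (f J))))"
      by (rule choice)
    then obtain f where f: "\<And>J. J \<le> fst (snd (f J)) \<and> C * 2 powr (\<gamma> * real (fst (snd (f J)))) \<le>
        cmod (c (fst (f J)) (fst (snd (f J))) (snd (snd (f J))) * psv (fst (f J)) (fst (snd (f J))) (snd (snd (f J))))"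
      by blast
    have "filterlim (\<lambda>n. fst (snd (f n))) at_top sequentially"
      unfolding filterlim_at_top using f
      by (metis (mono_tags, lifting) eventually_sequentiallyI order.trans)
    then show "\<exists>C > 0. \<exists>(ii :: nat \<Rightarrow> 'i) (js :: nat \<Rightarrow> nat) (ks :: nat \<Rightarrow> int ^ 'd).
      filterlim js at_top sequentially \<and>
      (\<forall>n. cmod (c (ii n) (js n) (ks n) * wav \<psi> (ii n) (js n) (ks n) x0) \<ge> C * 2 powr (\<gamma> * real (js n)))"
      using C(1) f unfolding psv_def
      apply (intro exI[of _ C] conjI)
       apply simp
      apply (rule exI[of _ "\<lambda>n. fst (f n)"], rule exI[of _ "\<lambda>n. fst (snd (f n))"],
          rule exI[of _ "\<lambda>n. snd (snd (f n))"])
      apply auto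
      done
  qed
  then show ?thesis unfolding div_exp_def by simp
qed

lemma dset_mono: assumes "dset c \<gamma>" "\<gamma>' \<le> \<gamma>" shows "dset c \<gamma>'"
proof -
  obtain C where C: "C > 0" "\<forall>J. \<exists>i j k. J \<le> j \<and> C * 2 powr (\<gamma> * real j) \<le> cmod (c i j k * psv i j k)"
    using assms(1) unfolding dset_def by blast
  have "\<forall>J. \<exists>i j k. J \<le> j \<and> C * 2 powr (\<gamma>' * real j) \<le> cmod (c i j k * psv i j k)"
  proof
    fix J
    obtain i j k where "J \<le> j" "C * 2 powr (\<gamma> * real j) \<le> cmod (c i j k * psv i j k)" using C by blast
    moreover have "C * 2 powr (\<gamma>' * real j) \<le> C * 2 powr (\<gamma> * real j)"
      using assms(2) C(1) by (intro mult_left_mono powr_mono mult_right_mono) auto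
    ultimately show "\<exists>i j k. J \<le> j \<and> C * 2 powr (\<gamma>' * real j) \<le> cmod (c i j k * psv i j k)"
      by (meson order_trans)
  qed
  then show ?thesis using C(1) unfolding dset_def by blast
qed

lemma dset_add: "dset (a + b) \<gamma> \<Longrightarrow> dset a \<gamma> \<or> dset b \<gamma>"
proof (rule ccontr)
  assume H: "dset (a + b) \<gamma>" "\<not> (dset a \<gamma> \<or> dset b \<gamma>)"
  then obtain C where C: "C > 0" "\<forall>J. \<exists>i j k. J \<le> j \<and> C * 2 powr (\<gamma> * real j) \<le> cmod ((a + b) i j k * psv i j k)"
    unfolding dset_def by blast
  have "\<exists>J. \<forall>i j k. J \<le> j \<longrightarrow> cmod (a i j k * psv i j k) < C/2 * 2 powr (\<gamma> * real j)"
    using H(2) C(1) unfolding dset_def by (metis half_gt_zero not_le)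
  then obtain J1 where J1: "\<And>i j k. J1 \<le> j \<Longrightarrow> cmod (a i j k * psv i j k) < C/2 * 2 powr (\<gamma> * real j)" by blast
  have "\<exists>J. \<forall>i j k. J \<le> j \<longrightarrow> cmod (b i j k * psv i j k) < C/2 * 2 powr (\<gamma> * real j)"
    using H(2) C(1) unfolding dset_def by (metis half_gt_zero not_le)
  then obtain J2 where J2: "\<And>i j k. J2 \<le> j \<Longrightarrow> cmod (b i j k * psv i j k) < C/2 * 2 powr (\<gamma> * real j)" by blast
  obtain i j k where ijk: "max J1 J2 \<le> j" "C * 2 powr (\<gamma> * real j) \<le> cmod ((a + b) i j k * psv i j k)"
    using C(2) by blast
  have "cmod ((a + b) i j k * psv i j k) \<le> cmod (a i j k * psv i j k) + cmod (b i j k * psv i j k)"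
    by (simp add: distrib_right norm_triangle_ineq)
  also have "\<dots> < C/2 * 2 powr (\<gamma> * real j) + C/2 * 2 powr (\<gamma> * real j)"
    using J1[of j i k] J2[of j i k] ijk(1) by simp
  finally show False using ijk(2) by simp
qed

lemma dset_cscale: assumes "t \<noteq> 0" "dset c \<gamma>" shows "dset (cscale t c) \<gamma>"
proof -
  obtain C where C: "C > 0" "\<forall>J. \<exists>i j k. J \<le> j \<and> C * 2 powr (\<gamma> * real j) \<le> cmod (c i j k * psv i j k)"
    using assms unfolding dset_def by blast
  show ?thesis unfolding dset_def
  proof (intro exI[of _ "C * cmod t"] conjI allI)
    fix J
    obtain i j k where "J \<le> j" "C * 2 powr (\<gamma> * real j) \<le> cmod (c i j k * psv i j k)" using C by blast
    moreover have "cmod (cscale t c i j k * psv i j k) = cmod t * cmod (c i j k * psv i j k)"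
      by (simp add: cscale_def norm_mult mult.assoc)
    moreover have "cmod t * (C * 2 powr (\<gamma> * real j)) \<le> cmod t * cmod (c i j k * psv i j k)"
      using calculation(2) by (rule mult_left_mono) simp
    ultimately have "J \<le> j \<and> C * cmod t * 2 powr (\<gamma> * real j) \<le> cmod (cscale t c i j k * psv i j k)"
      by (simp add: mult_ac)
    then show "\<exists>i j k. J \<le> j \<and> C * cmod t * 2 powr (\<gamma> * real j) \<le> cmod (cscale t c i j k * psv i j k)"
      by blast
  qed (use C assms in auto)
qed

lemma dset_cscale_iff: "t \<noteq> 0 \<Longrightarrow> dset (cscale t c) \<gamma> \<longleftrightarrow> dset c \<gamma>"
proof -
  assume t: "t \<noteq> 0"
  have "cscale (inverse t) (cscale t c) = c" using t by (simp add: cscale_def fun_eq_iff)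
  then show ?thesis using dset_cscale[OF t, of c \<gamma>] dset_cscale[of "inverse t" "cscale t c" \<gamma>] t by auto
qed

lemma dset_uminus: "dset (- c) \<gamma> \<longleftrightarrow> dset c \<gamma>"
  using dset_cscale_iff[of "-1" c \<gamma>] by (simp add: cscale_minus)

lemma psi_bound: obtains B where "B > 0" "\<And>i j k. cmod (psv i j k) \<le> B"
proof -
  have "\<forall>i. \<exists>B. \<forall>x. cmod (\<psi> i x) \<le> B" using bfd unfolding bounded_fast_decay_def by blast
  then obtain Bf where Bf: "\<And>i x. cmod (\<psi> i x) \<le> Bf i" by metis
  define B where "B = 1 + (\<Sum>i\<in>UNIV. \<bar>Bf i\<bar>)"
  have "Bf i \<le> (\<Sum>i\<in>UNIV. \<bar>Bf i\<bar>)" for i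
    using member_le_sum[of i UNIV "\<lambda>i. \<bar>Bf i\<bar>"] by auto
  then have "cmod (psv i j k) \<le> B" for i j k
    unfolding psv_def wav_def B_def by (meson Bf add_increasing zero_le_one order_trans)
  moreover have "B > 0" unfolding B_def by (simp add: add_pos_nonneg sum_nonneg)
  ultimately show ?thesis using that by blast
qed

lemma coord_bound:
  assumes "c \<in> E"
  shows "cmod (c i j k) * W j \<le> enn2real (BN c)"
proof -
  have "ennreal (cmod (c i j k) * W j) \<le> BN c" unfolding W_def by (rule coord_le_bnorm[OF p0 q0])
  then have "enn2real (ennreal (cmod (c i j k) * W j)) \<le> enn2real (BN c)"
    using assms unfolding bspace_def by (intro enn2real_mono) auto
  then show ?thesis by (simp add: less_imp_le)
qed

lemma dset_le_tgt:
  assumes "c \<in> E" "dset c \<gamma>"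
  shows "\<gamma> \<le> tgt"
proof (rule ccontr)
  assume "\<not> \<gamma> \<le> tgt"
  then have e: "\<gamma> - tgt > 0" by simp
  obtain B where B: "B > 0" "\<And>i j k. cmod (psv i j k) \<le> B" using psi_bound by blast
  define M where "M = enn2real (BN c)"
  have M0: "M \<ge> 0" by (simp add: M_def)
  obtain C where C: "C > 0" "\<forall>J. \<exists>i j k. J \<le> j \<and> C * 2 powr (\<gamma> * real j) \<le> cmod (c i j k * psv i j k)"
    using assms unfolding dset_def by blast
  have "filterlim (\<lambda>j::nat. 2 powr ((\<gamma> - tgt) * real j)) at_top at_top"
    using e by real_asymp
  then have "eventually (\<lambda>j::nat. 2 powr ((\<gamma> - tgt) * real j) > M * B / C) at_top"
    by (simp add: filterlim_at_top_dense)
  then obtain J where J: "\<And>j. j \<ge> J \<Longrightarrow> 2 powr ((\<gamma> - tgt) * real j) > M * B / C"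
    by (auto simp: eventually_at_top_linorder)
  obtain i j k where ijk: "J \<le> j" "C * 2 powr (\<gamma> * real j) \<le> cmod (c i j k * psv i j k)" using C by blast
  have cB: "cmod (c i j k * psv i j k) \<le> cmod (c i j k) * B"
    using B by (simp add: norm_mult mult_left_mono)
  have cb: "cmod (c i j k) \<le> M * 2 powr (tgt * real j)"
  proof -
    have "cmod (c i j k) = (cmod (c i j k) * W j) * 2 powr (tgt * real j)"
      by (simp add: W_eq powr_minus field_simps)
    also have "\<dots> \<le> M * 2 powr (tgt * real j)"
      using coord_bound[OF assms(1)] unfolding M_def by (intro mult_right_mono) auto
    finally show ?thesis .
  qed
  have "C * 2 powr (\<gamma> * real j) \<le> M * 2 powr (tgt * real j) * B"
    using ijk(2) cB mult_right_mono[OF cb, of B] B(1) by linarith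
  then have "C * (2 powr ((\<gamma> - tgt) * real j) * 2 powr (tgt * real j)) \<le> M * B * 2 powr (tgt * real j)"
    by (simp add: powr_add[symmetric] algebra_simps)
  then have "C * 2 powr ((\<gamma> - tgt) * real j) \<le> M * B"
    by (simp add: mult.assoc[symmetric])
  then have "2 powr ((\<gamma> - tgt) * real j) \<le> M * B / C" using C(1) by (simp add: field_simps)
  then show False using J[OF ijk(1)] by simp
qed

lemma div_exp_le_tgt: "c \<in> E \<Longrightarrow> div_exp \<psi> c x0 \<le> ereal tgt"
  unfolding div_exp_eq by (auto intro!: Sup_least dest: dset_le_tgt)

lemma div_exp_tgt_iff:
  assumes "c \<in> E"
  shows "div_exp \<psi> c x0 = ereal tgt \<longleftrightarrow> (\<forall>\<gamma> < tgt. dset c \<gamma>)"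
proof
  assume H: "div_exp \<psi> c x0 = ereal tgt"
  show "\<forall>\<gamma> < tgt. dset c \<gamma>"
  proof (intro allI impI)
    fix \<gamma> assume "\<gamma> < tgt"
    then have "ereal \<gamma> < Sup (ereal ` {\<gamma>. dset c \<gamma>})" using H div_exp_eq by simp
    then obtain \<gamma>' where "dset c \<gamma>'" "\<gamma> < \<gamma>'" by (auto simp: less_Sup_iff)
    then show "dset c \<gamma>" using dset_mono by auto
  qed
next
  assume H: "\<forall>\<gamma> < tgt. dset c \<gamma>"
  have "ereal tgt \<le> div_exp \<psi> c x0"
  proof (rule dense_le)
    fix y assume "y < ereal tgt"
    then show "y \<le> div_exp \<psi> c x0"
    proof (cases y)
      case (real g)
      then have "dset c g" using H \<open>y < ereal tgt\<close> by simp
      then show ?thesis unfolding div_exp_eq using real by (auto intro: Sup_upper)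
    qed auto
  qed
  then show "div_exp \<psi> c x0 = ereal tgt" using div_exp_le_tgt[OF assms] by simp
qed

end

lemma Lp_single:
  assumes "p > 0"
  shows "Lp p (\<lambda>x. if x = x0 then a else 0) = a"
  using assms
proof (cases rule: ereal_pos_cases)
  case 1
  have "(SUP x\<in>UNIV. if x = x0 then a else 0) = a"
    by (rule antisym) (auto intro!: SUP_least SUP_upper2[of x0])
  then show ?thesis using 1 by (simp add: Lp_def)
next
  case (2 P)
  have "(\<lambda>x. epow (if x = x0 then a else 0) P) = (\<lambda>x. epow a P * indicator {x0} x)"
    by (auto simp: fun_eq_iff)
  then have "(\<integral>\<^sup>+x. epow (if x = x0 then a else 0) P \<partial>count_space UNIV) = epow a P"
    by simp
  then show ?thesis using 2 by (simp add: Lp_def epow_inv)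
qed

context wset
begin

lemma bnorm_single:
  "BN (\<lambda>i' j' k'. if (i', j', k') = (i, j, k) then v else 0) = ennreal (cmod v * W j)"
proof -
  have "level_norm s p (\<lambda>i' j' k'. if (i', j', k') = (i, j, k) then v else 0) =
      (\<lambda>j'. if j' = j then ennreal (cmod v * W j) else 0)"
  proof
    fix j'
    have "lev s p (\<lambda>i' j' k'. if (i', j', k') = (i, j, k) then v else 0) j' =
        (\<lambda>ik. if ik = (i, k) then (if j' = j then ennreal (cmod v * W j) else 0) else 0)"
      by (auto simp: fun_eq_iff lev_def W_def)
    then show "level_norm s p (\<lambda>i' j' k'. if (i', j', k') = (i, j, k) then v else 0) j' =
      (if j' = j then ennreal (cmod v * W j) else 0)"
      using p0 by (simp add: level_norm_Lp Lp_single)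
  qed
  then show ?thesis using q0 by (simp add: bnorm_Lp Lp_single)
qed

lemma BN_zero [simp]: "BN 0 = 0" by (rule bnorm_zero[OF p0 q0])

abbreviation T where "T \<equiv> btop s p q :: ('i,'d) coeffs topology"

definition bball where "bball c r = {c' \<in> E. BN (c' - c) < ennreal r}"

lemma topspace_T: "topspace T = E"
  unfolding btop_def topology_generated_by_topspace
proof (rule antisym)
  show "\<Union> {{c' \<in> E. BN (c' - c) < ennreal r} | c r. c \<in> E \<and> r > 0} \<subseteq> E" by blast
  show "E \<subseteq> \<Union> {{c' \<in> E. BN (c' - c) < ennreal r} | c r. c \<in> E \<and> r > 0}"
  proof
    fix c assume c: "c \<in> E"
    have "{c' \<in> E. BN (c' - c) < ennreal 1} \<in> {{c' \<in> E. BN (c' - c) < ennreal r} | c r. c \<in> E \<and> r > 0}"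
      using c by (intro CollectI exI[of _ c] exI[of _ "1::real"]) simp
    moreover have "c \<in> {c' \<in> E. BN (c' - c) < ennreal 1}" using c by simp
    ultimately show "c \<in> \<Union> {{c' \<in> E. BN (c' - c) < ennreal r} | c r. c \<in> E \<and> r > 0}"
      by (rule UnionI)
  qed
qed

lemma ball_open: "c \<in> E \<Longrightarrow> r > 0 \<Longrightarrow> openin T (bball c r)"
  unfolding btop_def bball_def by (rule topology_generated_by_Basis) blast

lemma center_in_ball: "c \<in> E \<Longrightarrow> r > 0 \<Longrightarrow> c \<in> bball c r"
  by (simp add: bball_def)

lemma ball_perturb:
  assumes "c \<in> E" "x \<in> E" "BN (x - c) < ennreal r"
  obtains \<eta> where "\<eta> > 0" "\<And>y. y \<in> E \<Longrightarrow> BN (y - x) < ennreal \<eta> \<Longrightarrow> BN (y - c) < ennreal r"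
proof -
  define \<rho> where "\<rho> = rr p q"
  note rp = rr_props[OF p0 q0, folded \<rho>_def]
  define \<beta> where "\<beta> = enn2real (BN (x - c))"
  have \<beta>: "BN (x - c) = ennreal \<beta>" "\<beta> \<ge> 0"
    using assms bspace_diff[OF p0 q0 assms(2,1)] unfolding \<beta>_def bspace_def by auto
  have r0: "r > 0"
  proof (rule ccontr)
    assume "\<not> r > 0"
    then have "ennreal r = 0" by (simp add: ennreal_eq_0_iff)
    then show False using assms(3) by simp
  qed
  have r: "\<beta> < r" "r > 0" using assms(3) \<beta> r0 by (auto simp: ennreal_less_iff)
  have "\<beta> powr \<rho> < r powr \<rho>" using r \<beta> rp by (intro powr_less_mono2) auto
  define \<eta> where "\<eta> = (r powr \<rho> - \<beta> powr \<rho>) powr (1/\<rho>)"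
  have \<eta>: "\<eta> > 0" "\<eta> powr \<rho> = r powr \<rho> - \<beta> powr \<rho>"
    using \<open>\<beta> powr \<rho> < r powr \<rho>\<close> rp by (auto simp: \<eta>_def powr_powr)
  show ?thesis
  proof (rule that[OF \<eta>(1)])
    fix y assume y: "y \<in> E" "BN (y - x) < ennreal \<eta>"
    have "epow (BN (y - c)) \<rho> = epow (BN ((x - c) + (y - x))) \<rho>" by simp
    also have "\<dots> \<le> epow (BN (x - c)) \<rho> + epow (BN (y - x)) \<rho>"
      unfolding \<rho>_def by (rule bnorm_rtriangle[OF p0 q0])
    also have "\<dots> < ennreal (\<beta> powr \<rho>) + ennreal (\<eta> powr \<rho>)"
    proof -
      have "epow (BN (y - x)) \<rho> < epow (ennreal \<eta>) \<rho>" using y(2) rp by (simp add: epow_less_iff)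
      then show ?thesis using \<beta> \<eta> by (simp add: epow_ennreal)
    qed
    also have "\<dots> = ennreal (\<beta> powr \<rho> + \<eta> powr \<rho>)" by (rule ennreal_plus[symmetric]) auto
    also have "\<dots> = epow (ennreal r) \<rho>" using \<eta> r by (simp add: epow_ennreal)
    finally show "BN (y - c) < ennreal r" using rp by (simp add: epow_less_iff)
  qed
qed

lemma openin_T_metric:
  assumes "openin T U" "x \<in> U"
  obtains \<eta> where "\<eta> > 0" "\<And>y. y \<in> E \<Longrightarrow> BN (y - x) < ennreal \<eta> \<Longrightarrow> y \<in> U"
proof -
  have "generate_topology_on {{c' \<in> E. BN (c' - c) < ennreal r} | c r. c \<in> E \<and> r > 0} U"
    using assms(1) unfolding btop_def by (rule openin_topology_generated_by)
  then have "\<forall>x\<in>U. \<exists>\<eta>>0. \<forall>y. y \<in> E \<longrightarrow> BN (y - x) < ennreal \<eta> \<longrightarrow> y \<in> U"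
  proof (induct)
    case (Int a b)
    show ?case
    proof
      fix x assume "x \<in> a \<inter> b"
      then obtain \<eta>1 \<eta>2 where "\<eta>1 > 0" "\<forall>y. y \<in> E \<longrightarrow> BN (y - x) < ennreal \<eta>1 \<longrightarrow> y \<in> a"
        "\<eta>2 > 0" "\<forall>y. y \<in> E \<longrightarrow> BN (y - x) < ennreal \<eta>2 \<longrightarrow> y \<in> b"
        using Int by blast
      then show "\<exists>\<eta>>0. \<forall>y. y \<in> E \<longrightarrow> BN (y - x) < ennreal \<eta> \<longrightarrow> y \<in> a \<inter> b"
      proof (intro exI[of _ "min \<eta>1 \<eta>2"] conjI allI impI)
        show "0 < min \<eta>1 \<eta>2" using \<open>\<eta>1 > 0\<close> \<open>\<eta>2 > 0\<close> by simp
        fix y assume y: "y \<in> E" "BN (y - x) < ennreal (min \<eta>1 \<eta>2)"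
        have "ennreal (min \<eta>1 \<eta>2) \<le> ennreal \<eta>1" "ennreal (min \<eta>1 \<eta>2) \<le> ennreal \<eta>2"
          by (auto intro: ennreal_leI)
        then have "BN (y - x) < ennreal \<eta>1" "BN (y - x) < ennreal \<eta>2" using y(2) by auto
        then show "y \<in> a \<inter> b" using y(1) \<open>\<forall>y. y \<in> E \<longrightarrow> BN (y - x) < ennreal \<eta>1 \<longrightarrow> y \<in> a\<close>
          \<open>\<forall>y. y \<in> E \<longrightarrow> BN (y - x) < ennreal \<eta>2 \<longrightarrow> y \<in> b\<close> by blast
      qed
    qed
  next
    case (UN K)
    then show ?case by blast
  next
    case (Basis s)
    then obtain c r where cr: "s = {c' \<in> E. BN (c' - c) < ennreal r}" "c \<in> E" "r > 0" by blast
    show ?case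
    proof
      fix x assume "x \<in> s"
      then have "x \<in> E" "BN (x - c) < ennreal r" using cr by auto
      then obtain \<eta> where "\<eta> > 0" "\<And>y. y \<in> E \<Longrightarrow> BN (y - x) < ennreal \<eta> \<Longrightarrow> BN (y - c) < ennreal r"
        using ball_perturb[OF cr(2)] by blast
      then show "\<exists>\<eta>>0. \<forall>y. y \<in> E \<longrightarrow> BN (y - x) < ennreal \<eta> \<longrightarrow> y \<in> s"
        using cr by blast
    qed
  qed auto
  then show ?thesis using assms(2) that by blast
qed

lemma coord_diff_bound:
  assumes "a \<in> E" "b \<in> E"
  shows "ennreal (cmod (a i j k - b i j k) * W j) \<le> BN (a - b)"
  using coord_le_bnorm[OF p0 q0, of "a - b" i j k s] by (simp add: W_def)

lemma openin_coord:
  assumes "open Ou"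
  shows "openin T {c \<in> E. c i j k \<in> Ou}"
proof (subst openin_subopen, intro ballI)
  fix c assume c: "c \<in> {c \<in> E. c i j k \<in> Ou}"
  then obtain \<epsilon> where \<epsilon>: "\<epsilon> > 0" "\<And>z. dist z (c i j k) < \<epsilon> \<Longrightarrow> z \<in> Ou"
    using assms by (auto simp: open_dist)
  have "bball c (\<epsilon> * W j) \<subseteq> {c \<in> E. c i j k \<in> Ou}"
  proof
    fix c' assume c': "c' \<in> bball c (\<epsilon> * W j)"
    then have "ennreal (cmod (c' i j k - c i j k) * W j) < ennreal (\<epsilon> * W j)"
      using coord_diff_bound[of c' c i j k] c by (auto simp: bball_def intro: le_less_trans)
    then have "cmod (c' i j k - c i j k) * W j < \<epsilon> * W j"
      using less_imp_le[OF W_pos[of j]] by (subst (asm) ennreal_less_iff) auto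
    then have "dist (c' i j k) (c i j k) < \<epsilon>" by (simp add: dist_norm)
    then show "c' \<in> {c \<in> E. c i j k \<in> Ou}" using \<epsilon> c' by (auto simp: bball_def)
  qed
  then show "\<exists>U. openin T U \<and> c \<in> U \<and> U \<subseteq> {c \<in> E. c i j k \<in> Ou}"
    using ball_open[of c "\<epsilon> * W j"] center_in_ball[of c "\<epsilon> * W j"] c \<epsilon> by auto
qed

lemma Hausdorff_T: "Hausdorff_space T"
  unfolding Hausdorff_space_def topspace_T
proof (intro allI impI, elim conjE)
  fix a b assume ab: "a \<in> E" "b \<in> E" "a \<noteq> b"
  then obtain i j k where ne: "a i j k \<noteq> b i j k" by (auto simp: fun_eq_iff)
  define \<delta> where "\<delta> = dist (a i j k) (b i j k) / 2"
  have \<delta>: "\<delta> > 0" using ne by (simp add: \<delta>_def)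
  let ?U = "{c \<in> E. c i j k \<in> ball (a i j k) \<delta>}"
  let ?V = "{c \<in> E. c i j k \<in> ball (b i j k) \<delta>}"
  have "disjnt ?U ?V"
    unfolding disjnt_def
  proof (rule ccontr)
    assume "?U \<inter> ?V \<noteq> {}"
    then obtain c where "dist (a i j k) (c i j k) < \<delta>" "dist (b i j k) (c i j k) < \<delta>" by auto
    then have "dist (a i j k) (b i j k) < 2 * \<delta>" by (smt (verit) dist_commute dist_triangle)
    then show False by (simp add: \<delta>_def)
  qed
  moreover have "openin T ?U" "openin T ?V" by (rule openin_coord, simp)+
  moreover have "a \<in> ?U" "b \<in> ?V" using ab \<delta> by auto
  ultimately show "\<exists>U V. openin T U \<and> openin T V \<and> a \<in> U \<and> b \<in> V \<and> disjnt U V"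
    by blast
qed

end

definition sgnc :: "complex \<Rightarrow> complex" where
  "sgnc z = (if z = 0 then 1 else z / complex_of_real (cmod z))"

lemma cmod_sgnc [simp]: "cmod (sgnc z) = 1"
  by (simp add: sgnc_def norm_divide)

lemma cmod_align:
  assumes "m \<ge> 0"
  shows "cmod (z + sgnc z * complex_of_real m) = cmod z + m"
proof (cases "z = 0")
  case True then show ?thesis using assms by (simp add: sgnc_def)
next
  case False
  have "z + sgnc z * complex_of_real m = z * complex_of_real (1 + m / cmod z)"
    using False by (simp add: sgnc_def of_real_add of_real_divide algebra_simps)
  moreover have "cmod (z * complex_of_real (1 + m / cmod z)) = cmod z * (1 + m / cmod z)"
  proof -
    have "cmod (complex_of_real (1 + m / cmod z)) = 1 + m / cmod z"
      unfolding norm_of_real using assms by (simp add: abs_of_nonneg)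
    then show ?thesis by (simp only: norm_mult)
  qed
  moreover have "cmod z * (1 + m / cmod z) = cmod z + m"
    using False by (simp add: distrib_left)
  ultimately show ?thesis by simp
qed

context wset
begin

lemma good_pos: "\<exists>C0>0. \<forall>J. \<exists>i j k. J \<le> j \<and> C0 \<le> cmod (psv i j k)"
proof -
  obtain C0 and L :: "('i \<times> nat \<times> (int ^ 'd)) set" where C0: "C0 > 0"
    and L: "\<forall>x \<in> unit_cube. \<exists>(i, j, k) \<in> L. cmod (wav \<psi> i j k x) \<ge> C0"
    using dyc unfolding dyadic_covering_def by blast
  have "\<exists>i j k. J \<le> j \<and> C0 \<le> cmod (psv i j k)" for J
  proof -
    define m :: "int ^ 'd" where "m = (\<chi> l. \<lfloor>(2 ^ J *\<^sub>R x0) $ l\<rfloor>)"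
    define y where "y = 2 ^ J *\<^sub>R x0 - ivec m"
    have "y \<in> unit_cube"
      unfolding unit_cube_def y_def m_def ivec_def
      by (auto simp: frac_def[symmetric] frac_lt_1)
    then obtain i jl kl where ijk: "(i, jl, kl) \<in> L" "cmod (wav \<psi> i jl kl y) \<ge> C0"
      using L by blast
    define k :: "int ^ 'd" where "k = (\<chi> l. 2 ^ jl * m $ l + kl $ l)"
    have "wav \<psi> i (J + jl) k x0 = wav \<psi> i jl kl y"
      unfolding wav_def
      by (rule arg_cong[where f = "\<psi> i"])
         (simp add: vec_eq_iff ivec_def k_def y_def algebra_simps power_add)
    then show ?thesis using ijk unfolding psv_def by (intro exI[of _ i] exI[of _ "J + jl"] exI[of _ k]) simp
  qed
  then show ?thesis using C0 by blast
qed

definition C0 where "C0 = (SOME C. C > 0 \<and> (\<forall>J. \<exists>i j k. J \<le> j \<and> C \<le> cmod (psv i j k)))"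

lemma C0: "C0 > 0" "\<forall>J. \<exists>i j k. J \<le> j \<and> C0 \<le> cmod (psv i j k)"
  using someI_ex[OF good_pos] unfolding C0_def by auto

definition gpos :: "nat \<Rightarrow> 'i \<times> nat \<times> (int ^ 'd)" where
  "gpos J = (SOME x. J \<le> fst (snd x) \<and> C0 \<le> cmod (psv (fst x) (fst (snd x)) (snd (snd x))))"

definition gi where "gi J = fst (gpos J)"
definition gj where "gj J = fst (snd (gpos J))"
definition gk where "gk J = snd (snd (gpos J))"

lemma gpos: "J \<le> gj J" "C0 \<le> cmod (psv (gi J) (gj J) (gk J))" "gpos J = (gi J, gj J, gk J)"
proof -
  have "\<exists>x. J \<le> fst (snd x) \<and> C0 \<le> cmod (psv (fst x) (fst (snd x)) (snd (snd x)))"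
  proof -
    obtain i j k where "J \<le> j" "C0 \<le> cmod (psv i j k)" using C0 by blast
    then show ?thesis by (intro exI[of _ "(i, j, k)"]) simp
  qed
  from someI_ex[OF this] show "J \<le> gj J" "C0 \<le> cmod (psv (gi J) (gj J) (gk J))"
    unfolding gpos_def[symmetric] gi_def gj_def gk_def by auto
  show "gpos J = (gi J, gj J, gk J)" by (simp add: gi_def gj_def gk_def)
qed

definition thr :: "nat \<Rightarrow> nat \<Rightarrow> real" where
  "thr n j = 2 powr ((tgt - 1 / (real n + 1)) * real j)"

definition U :: "nat \<Rightarrow> ('i,'d) coeffs set" where
  "U n = {c \<in> E. \<exists>i j k. n \<le> j \<and> thr n j < cmod (c i j k * psv i j k)}"

lemma U_open: "openin T (U n)"
proof -
  have eq: "U n = \<Union> ((\<lambda>(i, j, k). {c \<in> E. c i j k \<in> {z. thr n j < cmod (z * psv i j k)}}) ` {x. n \<le> fst (snd x)})"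
    unfolding U_def by (auto; blast)
  have "openin T {c \<in> E. c i j k \<in> {z. thr n j < cmod (z * psv i j k)}}" for i j k
    by (intro openin_coord open_Collect_less continuous_intros)
  then show ?thesis unfolding eq by (intro openin_Union) auto
qed

definition mJ :: "nat \<Rightarrow> nat \<Rightarrow> real" where "mJ n j = 2 * thr n j / C0"

definition pert :: "nat \<Rightarrow> ('i,'d) coeffs \<Rightarrow> nat \<Rightarrow> ('i,'d) coeffs" where
  "pert n x J = (\<lambda>i j k. if (i, j, k) = (gi J, gj J, gk J)
       then sgnc (x (gi J) (gj J) (gk J)) * complex_of_real (mJ n (gj J)) else 0)"

lemma mJ_pos: "mJ n j > 0" using C0 by (simp add: mJ_def thr_def)

lemma BN_pert: "BN (pert n x J) = ennreal (mJ n (gj J) * W (gj J))"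
  unfolding pert_def bnorm_single using mJ_pos[of n "gj J"] by (simp add: norm_mult)

lemma mJW_tendsto: "(\<lambda>j. mJ n j * W j) \<longlonglongrightarrow> 0"
proof -
  have "(\<lambda>j. mJ n j * W j) = (\<lambda>j::nat. 2 / C0 * 2 powr (- (1 / (real n + 1)) * real j))"
    by (auto simp: fun_eq_iff mJ_def thr_def W_eq powr_add[symmetric] algebra_simps)
  also have "\<dots> \<longlonglongrightarrow> 0"
  proof -
    define a where "a = 1 / (real n + 1)"
    have a: "a > 0" by (simp add: a_def)
    have "(\<lambda>j::nat. 2 powr (- a * real j)) \<longlonglongrightarrow> 0" using a by real_asymp
    from tendsto_mult[OF tendsto_const[of "2 / C0"] this] show ?thesis by (simp add: a_def)
  qed
  finally show ?thesis .
qed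

lemma U_dense: "T closure_of (U n) = topspace T"
proof (rule antisym)
  show "T closure_of U n \<subseteq> topspace T" by (rule closure_of_subset_topspace)
  show "topspace T \<subseteq> T closure_of U n"
  proof
    fix x assume x: "x \<in> topspace T"
    then have xE: "x \<in> E" by (simp add: topspace_T)
    show "x \<in> T closure_of U n"
      unfolding in_closure_of
    proof (intro conjI allI impI, fact x, elim conjE)
      fix Wo assume Wo: "x \<in> Wo" "openin T Wo"
      obtain \<eta> where \<eta>: "\<eta> > 0" "\<And>y. y \<in> E \<Longrightarrow> BN (y - x) < ennreal \<eta> \<Longrightarrow> y \<in> Wo"
        using openin_T_metric[OF Wo(2,1)] by blast
      have "eventually (\<lambda>j. mJ n j * W j < \<eta>) sequentially"
        using mJW_tendsto \<eta>(1) by (rule order_tendstoD(2))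
      then obtain N where N: "\<And>j. j \<ge> N \<Longrightarrow> mJ n j * W j < \<eta>"
        by (auto simp: eventually_sequentially)
      define J where "J = max N n"
      have jJ: "N \<le> gj J" "n \<le> gj J" using gpos(1)[of J] by (auto simp: J_def)
      define y where "y = x + pert n x J"
      have pE: "pert n x J \<in> E" by (simp add: bspace_def BN_pert)
      have yE: "y \<in> E" unfolding y_def by (rule bspace_add[OF p0 q0 xE pE])
      have "BN (y - x) < ennreal \<eta>"
        using N[OF jJ(1)]
        by (simp add: y_def BN_pert ennreal_less_iff[OF mult_nonneg_nonneg[OF less_imp_le[OF mJ_pos] less_imp_le[OF W_pos]]])
      then have "y \<in> Wo" using \<eta>(2) yE by blast
      moreover have "y \<in> U n"
      proof -
        have "cmod (y (gi J) (gj J) (gk J)) = cmod (x (gi J) (gj J) (gk J)) + mJ n (gj J)"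
          using mJ_pos[of n "gj J"] by (simp add: y_def pert_def cmod_align)
        then have "cmod (y (gi J) (gj J) (gk J)) \<ge> mJ n (gj J)" by simp
        then have "cmod (y (gi J) (gj J) (gk J) * psv (gi J) (gj J) (gk J)) \<ge> mJ n (gj J) * C0"
          using gpos(2)[of J] mJ_pos[of n "gj J"] C0(1) by (simp add: norm_mult mult_mono)
        moreover have "mJ n (gj J) * C0 = 2 * thr n (gj J)" using C0(1) by (simp add: mJ_def)
        moreover have "thr n (gj J) > 0" by (simp add: thr_def)
        ultimately have "thr n (gj J) < cmod (y (gi J) (gj J) (gk J) * psv (gi J) (gj J) (gk J))" by linarith
        then show ?thesis using yE jJ(2) unfolding U_def by blast
      qed
      ultimately show "\<exists>y. y \<in> U n \<and> y \<in> Wo" by blast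
    qed
  qed
qed

lemma U_Inter: "(\<Inter>n. U n) \<subseteq> {c \<in> E. div_exp \<psi> c x0 = ereal tgt}"
proof
  fix c assume c: "c \<in> (\<Inter>n. U n)"
  then have cE: "c \<in> E" by (auto simp: U_def)
  have "\<forall>\<gamma> < tgt. dset c \<gamma>"
  proof (intro allI impI)
    fix \<gamma> assume "\<gamma> < tgt"
    then obtain n0 :: nat where n0: "1 / (real n0 + 1) < tgt - \<gamma>"
      by (metis diff_gt_0_iff_gt nat_approx_posE of_nat_Suc add.commute)
    show "dset c \<gamma>" unfolding dset_def
    proof (intro exI[of _ 1] conjI allI)
      fix J
      define m where "m = max J n0"
      have "c \<in> U m" using c by blast
      then obtain i j k where ijk: "m \<le> j" "thr m j < cmod (c i j k * psv i j k)" by (auto simp: U_def)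
      have "1 / (real m + 1) \<le> 1 / (real n0 + 1)" by (simp add: m_def frac_le)
      then have "\<gamma> \<le> tgt - 1 / (real m + 1)" using n0 by linarith
      then have "2 powr (\<gamma> * real j) \<le> thr m j" unfolding thr_def
        by (intro powr_mono mult_right_mono) auto
      then show "\<exists>i j k. J \<le> j \<and> 1 * 2 powr (\<gamma> * real j) \<le> cmod (c i j k * psv i j k)"
        using ijk by (intro exI[of _ i] exI[of _ j] exI[of _ k]) (auto simp: m_def)
    qed simp
  qed
  then show "c \<in> {c \<in> E. div_exp \<psi> c x0 = ereal tgt}" using cE div_exp_tgt_iff[OF cE] by simp
qed

lemma residual_S: "residual T {c \<in> E. div_exp \<psi> c x0 = ereal tgt}"
  unfolding residual_def using U_open U_dense U_Inter by blast

end

lemma vector_space_cscale: "vector_space (cscale :: complex \<Rightarrow> ('i,'d) coeffs \<Rightarrow> ('i,'d) coeffs)"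
  by unfold_locales (auto simp: cscale_def fun_eq_iff algebra_simps)

lemma module_cscale: "module (cscale :: complex \<Rightarrow> ('i,'d) coeffs \<Rightarrow> ('i,'d) coeffs)"
  using vector_space_cscale by (simp add: module_iff_vector_space)

context wset
begin

primrec sp :: "nat \<Rightarrow> 'i \<times> nat \<times> (int ^ 'd)" where
  "sp 0 = gpos 0"
| "sp (Suc m) = gpos (fst (snd (sp m)) + 1)"

definition lv where "lv m = fst (snd (sp m))"
definition si where "si m = fst (sp m)"
definition sk where "sk m = snd (snd (sp m))"

lemma sp_eq: "sp m = (si m, lv m, sk m)" by (simp add: si_def lv_def sk_def)

lemma sp_good: "C0 \<le> cmod (psv (si m) (lv m) (sk m))"
  by (cases m) (auto simp: si_def lv_def sk_def gpos(3) gpos(2))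

lemma lv_Suc: "lv (Suc m) > lv m"
  using gpos(1)[of "lv m + 1"] by (simp add: lv_def gj_def)

lemma lv_strict_mono: "strict_mono lv"
  using lv_Suc by (simp add: strict_mono_Suc_iff)

lemma inj_lv: "inj lv" using lv_strict_mono by (rule strict_mono_imp_inj_on)

lemma inj_sp: "inj sp"
proof (rule injI)
  fix a b assume "sp a = sp b"
  then have "lv a = lv b" by (simp add: lv_def)
  then show "a = b" using inj_lv by (simp add: inj_eq)
qed

definition qq where "qq = (if q = \<infinity> then 1 else real_of_ereal q)"
lemma qq_pos: "qq > 0" using q0 unfolding qq_def by (cases rule: ereal_pos_cases) auto

definition rho :: "nat \<Rightarrow> real" where "rho j = (real j + 1) powr (- (2 / qq))"
lemma rho_pos: "rho j > 0" by (simp add: rho_def)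

definition src :: "nat \<Rightarrow> 'i \<times> nat \<times> (int ^ 'd)" where "src m = from_nat (fst (prod_decode m))"
definition fac :: "nat \<Rightarrow> real" where "fac m = W (fst (snd (src m))) * rho (lv m) / W (lv m)"
lemma fac_pos: "fac m > 0" by (simp add: fac_def rho_pos)

definition cf :: "('i,'d) coeffs \<Rightarrow> nat \<Rightarrow> complex" where
  "cf c m = c (fst (src m)) (fst (snd (src m))) (snd (snd (src m))) * complex_of_real (fac m)"

definition Tm :: "('i,'d) coeffs \<Rightarrow> ('i,'d) coeffs" where
  "Tm c = (\<lambda>i j k. if (i, j, k) \<in> range sp then cf c (inv sp (i, j, k)) else 0)"

lemma Tm_at: "Tm c (si m) (lv m) (sk m) = cf c m"
  unfolding Tm_def sp_eq[symmetric] using inj_sp by simp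

lemma Tm_add: "Tm (a + b) = Tm a + Tm b"
  by (auto simp: fun_eq_iff Tm_def cf_def distrib_right)

lemma Tm_cscale: "Tm (cscale t c) = cscale t (Tm c)"
  by (auto simp: fun_eq_iff Tm_def cf_def cscale_def)

lemma Tm_hom: "module_hom cscale cscale Tm"
  by (simp add: module_hom_iff module_cscale Tm_add Tm_cscale)

lemma Tm_inj: "inj Tm"
proof (rule injI)
  fix a b assume ab: "Tm a = Tm b"
  show "a = b"
  proof (intro ext)
    fix i :: 'i and j :: nat and k :: "int ^ 'd"
    define m where "m = prod_encode (to_nat (i, j, k), 0)"
    have src: "src m = (i, j, k)" by (simp add: src_def m_def)
    have "cf a m = cf b m" using ab Tm_at[of a m] Tm_at[of b m] by simp
    then show "a i j k = b i j k" using fac_pos[of m] by (simp add: cf_def src)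
  qed
qed

lemma rho_le1: "rho j \<le> 1"
proof -
  have "1 \<le> (real j + 1) powr (2 / qq)" using qq_pos by (intro ge_one_powr_ge_zero) auto
  then show ?thesis by (simp add: rho_def powr_minus field_simps)
qed

lemma Lp_rho_fin: "Lp q (\<lambda>j. ennreal (rho j)) < top"
  using q0
proof (cases rule: ereal_pos_cases)
  case 1
  have "(SUP j\<in>UNIV. ennreal (rho j)) \<le> 1"
    by (intro SUP_least) (simp add: rho_le1)
  then show ?thesis using 1 by (simp add: Lp_def le_less_trans)
next
  case (2 Q)
  have qQ: "qq = Q" unfolding qq_def using 2 by simp
  have rq: "rho j powr Q = inverse (real (Suc j) ^ 2)" for j
  proof -
    have "rho j powr Q = (real j + 1) powr (- (2 / Q) * Q)"
      unfolding rho_def qQ by (simp add: powr_powr)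
    also have "- (2 / Q) * Q = - 2" using 2(1) by simp
    finally show ?thesis by (simp add: powr_minus add.commute)
  qed
  have "(\<lambda>j. epow (ennreal (rho j)) Q) = (\<lambda>j. ennreal (inverse (real (Suc j) ^ 2)))"
    using rq rho_pos by (auto simp: fun_eq_iff epow_ennreal less_imp_le)
  moreover have "summable (\<lambda>j. inverse (real (Suc j) ^ 2))"
    using inverse_power_summable[of 2, where 'a=real] summable_Suc_iff[of "\<lambda>n. inverse (real n ^ 2)"]
    by simp
  ultimately have "(\<integral>\<^sup>+j. epow (ennreal (rho j)) Q \<partial>count_space UNIV) =
      ennreal (\<Sum>j. inverse (real (Suc j) ^ 2))"
    by (simp add: nn_integral_count_space_nat suminf_ennreal2)
  then show ?thesis using 2 by (simp add: Lp_def epow_less_top_iff)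
qed

lemma Tm_E: assumes "c \<in> E" shows "Tm c \<in> E"
proof -
  define M where "M = enn2real (BN c)"
  have M0: "M \<ge> 0" by (simp add: M_def)
  define pos where "pos j = (si (inv lv j), sk (inv lv j))" for j
  have lev_le: "lev s p (Tm c) j ik \<le> (if ik = pos j then ennreal (M * rho j) else 0)" for j ik
  proof (cases "(fst ik, j, snd ik) \<in> range sp")
    case True
    then obtain m where m: "sp m = (fst ik, j, snd ik)" by auto
    then have mm: "si m = fst ik" "lv m = j" "sk m = snd ik" by (auto simp: si_def lv_def sk_def)
    then have im: "inv lv j = m" using inj_lv by auto
    have "lev s p (Tm c) j ik = ennreal (cmod (cf c m) * W j)"
      using Tm_at[of c m] mm by (simp add: lev_def W_def)
    also have "cmod (cf c m) * W j = (cmod (c (fst (src m)) (fst (snd (src m))) (snd (snd (src m))))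
          * W (fst (snd (src m)))) * rho j"
    proof -
      have "cmod (cf c m) = cmod (c (fst (src m)) (fst (snd (src m))) (snd (snd (src m)))) * fac m"
        unfolding cf_def norm_mult norm_of_real using fac_pos[of m] by simp
      moreover have "fac m * W j = W (fst (snd (src m))) * rho j"
        using mm by (simp add: fac_def less_imp_neq[OF W_pos, symmetric])
      ultimately show ?thesis by (simp add: mult_ac)
    qed
    also have "\<dots> \<le> M * rho j"
      using coord_bound[OF assms] rho_pos[of j] unfolding M_def by (intro mult_right_mono) auto
    finally show ?thesis using mm im by (simp add: pos_def ennreal_leI)
  next
    case False
    then show ?thesis by (simp add: lev_def Tm_def)
  qed
  have "level_norm s p (Tm c) j \<le> ennreal (M * rho j)" for j
  proof -
    have "level_norm s p (Tm c) j \<le> Lp p (\<lambda>ik. if ik = pos j then ennreal (M * rho j) else 0)"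
      unfolding level_norm_Lp[OF p0] by (intro Lp_mono p0 lev_le)
    then show ?thesis using Lp_single[OF p0, of "pos j" "ennreal (M * rho j)"] by simp
  qed
  then have "BN (Tm c) \<le> Lp q (\<lambda>j. ennreal M * ennreal (rho j))"
    unfolding bnorm_Lp using M0 rho_pos by (intro Lp_mono q0) (simp add: ennreal_mult less_imp_le)
  also have "\<dots> = ennreal M * Lp q (\<lambda>j. ennreal (rho j))" using M0 q0 by (simp add: Lp_cmult)
  also have "\<dots> < top" using Lp_rho_fin by (simp add: ennreal_mult_less_top)
  finally show ?thesis by (simp add: bspace_def)
qed

lemma Tm_dset:
  assumes "c \<noteq> 0" "\<gamma> < tgt"
  shows "dset (Tm c) \<gamma>"
proof -
  obtain i0 j0 k0 where c0: "c i0 j0 k0 \<noteq> 0" using assms(1) by (auto simp: fun_eq_iff)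
  define nn where "nn = to_nat (i0, j0, k0)"
  define a where "a = 2 / qq"
  define e where "e = tgt - \<gamma>"
  have a: "a > 0" using qq_pos by (simp add: a_def)
  have e: "e > 0" using assms by (simp add: e_def)
  have "filterlim (\<lambda>l::nat. (real l + 1) powr (-a) / 2 powr (- e * real l)) at_top at_top"
    using a e by real_asymp
  then have "eventually (\<lambda>l::nat. (real l + 1) powr (-a) / 2 powr (- e * real l) \<ge> 1) at_top"
    unfolding filterlim_at_top by blast
  then obtain L0 where L0: "\<And>l. l \<ge> L0 \<Longrightarrow> (real l + 1) powr (-a) / 2 powr (- e * real l) \<ge> 1"
    by (auto simp: eventually_at_top_linorder)
  define C where "C = cmod (c i0 j0 k0) * W j0 * C0"
  have C: "C > 0" using c0 C0(1) by (simp add: C_def)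
  show ?thesis unfolding dset_def
  proof (intro exI[of _ C] conjI allI)
    fix J
    define m where "m = prod_encode (nn, max J L0)"
    have lvm: "lv m \<ge> max J L0"
      using strict_mono_imp_increasing[OF lv_strict_mono, of m] le_prod_encode_2[of "max J L0" nn]
      by (simp add: m_def)
    have src: "src m = (i0, j0, k0)" by (simp add: src_def m_def nn_def)
    define l where "l = lv m"
    have rl: "rho l \<ge> 2 powr (- e * real l)"
    proof -
      have "1 \<le> (real l + 1) powr (-a) / 2 powr (- e * real l)" using L0[of l] lvm by (simp add: l_def)
      then have "2 powr (- e * real l) \<le> (real l + 1) powr (-a)" by (simp add: le_divide_eq)
      then show ?thesis by (simp add: rho_def a_def)
    qed
    have "fac m = W j0 * rho l * 2 powr (tgt * real l)"
      by (simp add: fac_def src l_def W_eq powr_minus divide_inverse)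
    also have "\<dots> \<ge> W j0 * 2 powr (- e * real l) * 2 powr (tgt * real l)"
      using rl by (intro mult_right_mono mult_left_mono) (auto simp: less_imp_le)
    also have "W j0 * 2 powr (- e * real l) * 2 powr (tgt * real l) = W j0 * 2 powr (\<gamma> * real l)"
      by (simp add: e_def mult.assoc powr_add[symmetric] algebra_simps)
    finally have fm: "fac m \<ge> W j0 * 2 powr (\<gamma> * real l)" .
    have "cmod (Tm c (si m) l (sk m) * psv (si m) l (sk m)) = cmod (c i0 j0 k0) * fac m * cmod (psv (si m) l (sk m))"
      using Tm_at[of c m] fac_pos[of m] by (simp add: l_def cf_def src norm_mult)
    also have "\<dots> \<ge> cmod (c i0 j0 k0) * (W j0 * 2 powr (\<gamma> * real l)) * C0"
    proof -
      have A: "cmod (c i0 j0 k0) * (W j0 * 2 powr (\<gamma> * real l)) \<le> cmod (c i0 j0 k0) * fac m"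
        by (rule mult_left_mono[OF fm]) simp
      have B: "cmod (c i0 j0 k0) * fac m * C0 \<le> cmod (c i0 j0 k0) * fac m * cmod (psv (si m) l (sk m))"
        using sp_good[of m] fac_pos[of m] unfolding l_def by (intro mult_left_mono) auto
      show ?thesis using mult_right_mono[OF A, of C0] B C0(1) by simp
    qed
    finally have "C * 2 powr (\<gamma> * real l) \<le> cmod (Tm c (si m) l (sk m) * psv (si m) l (sk m))"
      by (simp add: C_def mult_ac)
    then show "\<exists>i j k. J \<le> j \<and> C * 2 powr (\<gamma> * real j) \<le> cmod (Tm c i j k * psv i j k)"
      using lvm by (intro exI[of _ "si m"] exI[of _ l] exI[of _ "sk m"]) (auto simp: l_def)
  qed (fact C)
qed

lemma Tm_S: assumes "c \<in> E" "c \<noteq> 0" shows "Tm c \<in> {c \<in> E. div_exp \<psi> c x0 = ereal tgt}"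
  using Tm_E[OF assms(1)] div_exp_tgt_iff[OF Tm_E[OF assms(1)]] Tm_dset[OF assms(2)] by auto

lemma E_subspace: "module.subspace cscale E"
  unfolding module.subspace_def[OF module_cscale]
  using bspace_zero[OF p0 q0] bspace_add[OF p0 q0] bspace_cscale[OF p0 q0] by blast

lemma lineable_S: "maximal_lineable E {c \<in> E. div_exp \<psi> c x0 = ereal tgt}"
proof -
  obtain HE where HE: "HE \<subseteq> E" "\<not> module.dependent cscale HE" "E \<subseteq> module.span cscale HE"
    using vector_space.maximal_independent_subset[OF vector_space_cscale, of E] by blast
  have "module.span cscale HE \<subseteq> E"
    by (rule module.span_minimal[OF module_cscale HE(1) E_subspace])
  then have spanHE: "module.span cscale HE = E" using HE(3) by (rule antisym)
  define V where "V = Tm ` E"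
  define H where "H = Tm ` HE"
  have subV: "module.subspace cscale V" unfolding V_def by (rule module_hom.subspace_image[OF Tm_hom E_subspace])
  have VS: "V \<subseteq> {c \<in> E. div_exp \<psi> c x0 = ereal tgt} \<union> {0}"
  proof
    fix v assume "v \<in> V"
    then obtain c where c: "c \<in> E" "v = Tm c" by (auto simp: V_def)
    show "v \<in> {c \<in> E. div_exp \<psi> c x0 = ereal tgt} \<union> {0}"
    proof (cases "c = 0")
      case True then show ?thesis using c module_hom.zero[OF Tm_hom] by simp
    next
      case False then show ?thesis using Tm_S[OF c(1)] c by simp
    qed
  qed
  have injT: "inj_on Tm X" for X by (rule inj_on_subset[OF Tm_inj]) simp
  have hV: "hamel_basis V H"
    unfolding hamel_basis_def
  proof (intro conjI)
    show "H \<subseteq> V" using HE(1) by (auto simp: H_def V_def)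
    show "\<not> module.dependent cscale H"
      unfolding H_def by (rule module_hom.independent_injective_image[OF Tm_hom HE(2) injT])
    show "module.span cscale H = V"
      unfolding H_def V_def module_hom.span_image[OF Tm_hom] spanHE ..
  qed
  have hE: "hamel_basis E HE" unfolding hamel_basis_def using HE(1,2) spanHE by simp
  have "HE \<approx> H" unfolding eqpoll_def H_def using inj_on_imp_bij_betw[OF injT] by blast
  then have eq: "H \<approx> HE" by (rule eqpoll_sym)
  show ?thesis unfolding maximal_lineable_def using subV VS hV hE eq by blast
qed

end

context wset
begin

definition g0 :: "('i,'d) coeffs" where "g0 = (\<lambda>i j k. if (i, j, k) = (undefined, 0, 0) then 1 else 0)"

lemma g0_E: "g0 \<in> E"
proof -
  have "BN g0 = ennreal (cmod 1 * W 0)" unfolding g0_def by (rule bnorm_single)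
  then show ?thesis by (simp add: bspace_def)
qed
lemma g0_ne: "g0 \<noteq> 0" by (auto simp: g0_def fun_eq_iff)

definition gg where "gg = Tm g0"
lemma gg_E: "gg \<in> E" unfolding gg_def by (rule Tm_E[OF g0_E])
lemma gg_dset: "\<gamma> < tgt \<Longrightarrow> dset gg \<gamma>" unfolding gg_def by (rule Tm_dset[OF g0_ne])

definition fl :: "real \<Rightarrow> ('i,'d) coeffs" where "fl t = cscale (complex_of_real t) gg"

lemma fl_E: "fl t \<in> E" unfolding fl_def by (rule bspace_cscale[OF p0 q0 gg_E])

lemma fl_diff: "fl t - fl t0 = cscale (complex_of_real (t - t0)) gg"
  by (simp add: fl_def cscale_def fun_eq_iff algebra_simps)

lemma fl_cont: "continuous_map euclideanreal T fl"
  unfolding btop_def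
proof (rule continuous_on_generated_topo)
  show "fl ` topspace euclideanreal \<subseteq> \<Union> {{c' \<in> E. BN (c' - c) < ennreal r} | c r. c \<in> E \<and> 0 < r}"
    using topspace_T fl_E unfolding btop_def by auto
  fix Ub assume "Ub \<in> {{c' \<in> E. BN (c' - c) < ennreal r} | c r. c \<in> E \<and> 0 < r}"
  then obtain c r where cr: "Ub = {c' \<in> E. BN (c' - c) < ennreal r}" "c \<in> E" "r > 0" by blast
  define G where "G = enn2real (BN gg)"
  have G: "BN gg = ennreal G" "G \<ge> 0" using gg_E unfolding G_def bspace_def by auto
  have "open {t. BN (fl t - c) < ennreal r}"
    unfolding open_dist
  proof (intro ballI)
    fix t0 assume "t0 \<in> {t. BN (fl t - c) < ennreal r}"
    then obtain \<eta> where \<eta>: "\<eta> > 0" "\<And>y. y \<in> E \<Longrightarrow> BN (y - fl t0) < ennreal \<eta> \<Longrightarrow> BN (y - c) < ennreal r"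
      using ball_perturb[OF cr(2) fl_E] by blast
    show "\<exists>e>0. \<forall>y. dist y t0 < e \<longrightarrow> y \<in> {t. BN (fl t - c) < ennreal r}"
    proof (intro exI[of _ "\<eta> / (G + 1)"] conjI allI impI)
      show "\<eta> / (G + 1) > 0" using \<eta> G by simp
      fix t assume "dist t t0 < \<eta> / (G + 1)"
      then have d: "\<bar>t - t0\<bar> * (G + 1) < \<eta>" using G by (simp add: dist_real_def field_simps)
      have "BN (fl t - fl t0) = ennreal (\<bar>t - t0\<bar> * G)"
        unfolding fl_diff bnorm_cscale[OF p0 q0] G norm_of_real using G(2) by (simp add: ennreal_mult)
      also have "\<dots> < ennreal \<eta>"
        using d G \<eta> by (subst ennreal_less_iff) (auto simp: algebra_simps intro: le_less_trans[rotated])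
      finally show "t \<in> {t. BN (fl t - c) < ennreal r}" using \<eta>(2)[OF fl_E] by simp
    qed
  qed
  moreover have "fl -` Ub \<inter> topspace euclideanreal = {t. BN (fl t - c) < ennreal r}"
    using cr(1) fl_E by auto
  ultimately show "openin euclideanreal (fl -` Ub \<inter> topspace euclideanreal)" by simp
qed

definition GS :: "('i,'d) coeffs set" where
  "GS = {c \<in> E. \<forall>n. \<exists>l. \<forall>J. \<exists>i j k. J \<le> j \<and>
      1 / (real l + 1) * 2 powr ((tgt - 1 / (real n + 1)) * real j) < cmod (c i j k * psv i j k)}"

lemma GS_eq: "GS = {c \<in> E. div_exp \<psi> c x0 = ereal tgt}"
proof (intro set_eqI iffI)
  fix c assume c: "c \<in> GS"
  then have cE: "c \<in> E" by (simp add: GS_def)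
  have "\<forall>\<gamma> < tgt. dset c \<gamma>"
  proof (intro allI impI)
    fix \<gamma> assume "\<gamma> < tgt"
    then obtain n :: nat where n: "1 / (real n + 1) < tgt - \<gamma>"
      by (metis diff_gt_0_iff_gt nat_approx_posE of_nat_Suc add.commute)
    obtain l where l: "\<forall>J. \<exists>i j k. J \<le> j \<and>
      1 / (real l + 1) * 2 powr ((tgt - 1 / (real n + 1)) * real j) < cmod (c i j k * psv i j k)"
      using c unfolding GS_def by blast
    have "dset c (tgt - 1 / (real n + 1))"
      unfolding dset_def
    proof (intro exI[of _ "1 / (real l + 1)"] conjI allI)
      fix J
      obtain i j k where h: "J \<le> j" "1 / (real l + 1) * 2 powr ((tgt - 1 / (real n + 1)) * real j) < cmod (c i j k * psv i j k)"
        using l by blast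
      then show "\<exists>i j k. J \<le> j \<and> 1 / (real l + 1) * 2 powr ((tgt - 1 / (real n + 1)) * real j) \<le> cmod (c i j k * psv i j k)"
        using less_imp_le[OF h(2)] by blast
    qed simp
    then show "dset c \<gamma>" by (rule dset_mono) (use n in linarith)
  qed
  then show "c \<in> {c \<in> E. div_exp \<psi> c x0 = ereal tgt}" using div_exp_tgt_iff[OF cE] cE by simp
next
  fix c assume c: "c \<in> {c \<in> E. div_exp \<psi> c x0 = ereal tgt}"
  then have cE: "c \<in> E" by simp
  have all: "\<forall>\<gamma> < tgt. dset c \<gamma>" using c div_exp_tgt_iff[OF cE] by simp
  have "\<exists>l. \<forall>J. \<exists>i j k. J \<le> j \<and>
      1 / (real l + 1) * 2 powr ((tgt - 1 / (real n + 1)) * real j) < cmod (c i j k * psv i j k)" for n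
  proof -
    have "dset c (tgt - 1 / (real n + 1))" using all by simp
    then obtain C where C: "C > 0" "\<forall>J. \<exists>i j k. J \<le> j \<and>
        C * 2 powr ((tgt - 1 / (real n + 1)) * real j) \<le> cmod (c i j k * psv i j k)"
      unfolding dset_def by blast
    obtain l :: nat where l: "1 / (real l + 1) < C"
      using C(1) by (metis nat_approx_posE of_nat_Suc add.commute)
    show ?thesis
    proof (intro exI[of _ l] allI)
      fix J
      obtain i j k where "J \<le> j" "C * 2 powr ((tgt - 1 / (real n + 1)) * real j) \<le> cmod (c i j k * psv i j k)"
        using C by blast
      moreover have "1 / (real l + 1) * 2 powr ((tgt - 1 / (real n + 1)) * real j) <
          C * 2 powr ((tgt - 1 / (real n + 1)) * real j)"
        using l by (intro mult_strict_right_mono) auto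
      ultimately show "\<exists>i j k. J \<le> j \<and>
          1 / (real l + 1) * 2 powr ((tgt - 1 / (real n + 1)) * real j) < cmod (c i j k * psv i j k)"
        by (meson less_le_trans)
    qed
  qed
  then show "c \<in> GS" using cE unfolding GS_def by blast
qed

abbreviation BS where "BS \<equiv> borel_sets T"

lemma opens_Pow: "{Uo. openin T Uo} \<subseteq> Pow E"
  using openin_subset topspace_T by auto

lemma sa_BS: "sigma_algebra E BS"
  unfolding borel_sets_def topspace_T using opens_Pow by (rule sigma_algebra_sigma_sets)

lemma open_BS: "openin T Uo \<Longrightarrow> Uo \<in> BS"
  unfolding borel_sets_def topspace_T by (rule sigma_sets.Basic) simp

lemma GS_BS: "GS \<in> BS"
proof -
  interpret sa: sigma_algebra E BS by (rule sa_BS)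
  define Os where "Os n l i j k = {c \<in> E. c i j k \<in>
      {z. 1 / (real l + 1) * 2 powr ((tgt - 1 / (real n + 1)) * real j) < cmod (z * psv i j k)}}" for n l :: nat and i j k
  have Os: "Os n l i j k \<in> BS" for n l i j k
    unfolding Os_def by (intro open_BS openin_coord open_Collect_less continuous_intros)
  have eq: "GS = (\<Inter>n\<in>UNIV. \<Union>l\<in>UNIV. \<Inter>J\<in>UNIV. \<Union>x\<in>{x::('i \<times> nat \<times> (int ^ 'd)). J \<le> fst (snd x)}.
      Os n l (fst x) (fst (snd x)) (snd (snd x)))"
    unfolding GS_def Os_def by (auto; blast)
  show ?thesis unfolding eq
    by (intro sa.countable_INT' sa.countable_UN' image_subsetI Os) auto
qed

definition AS where "AS = E - GS"
lemma AS_BS: "AS \<in> BS"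
proof -
  interpret sa: sigma_algebra E BS by (rule sa_BS)
  show ?thesis unfolding AS_def by (rule sa.compl_sets[OF GS_BS])
qed

definition M0 where "M0 = restrict_space lborel {0..1::real}"
definition NB where "NB = measure_of E {Uo. openin T Uo} (\<lambda>_. 0)"
definition mu where "mu = distr M0 NB fl"

lemma space_NB: "space NB = E" by (simp add: NB_def space_measure_of_conv)
lemma sets_NB: "sets NB = BS"
  using opens_Pow by (simp add: NB_def sets_measure_of_conv borel_sets_def topspace_T)

lemma space_M0: "space M0 = {0..1}" by (simp add: M0_def space_restrict_space)

lemma fl_meas: "fl \<in> measurable M0 NB"
  unfolding NB_def
proof (rule measurable_measure_of[OF opens_Pow])
  show "fl \<in> space M0 \<rightarrow> E" using fl_E by auto
  fix Uo assume "Uo \<in> {Uo. openin T Uo}"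
  then have "openin euclideanreal {t \<in> topspace euclideanreal. fl t \<in> Uo}"
    using fl_cont by (simp add: continuous_map_def)
  then have "open (fl -` Uo)" by (simp add: vimage_def)
  then have "fl -` Uo \<in> sets lborel" by simp
  then show "fl -` Uo \<inter> space M0 \<in> sets M0"
    unfolding M0_def by (auto simp: sets_restrict_space space_restrict_space)
qed

lemma emeasure_M0: "A \<subseteq> {0..1} \<Longrightarrow> emeasure M0 A = emeasure lborel A"
  unfolding M0_def by (rule emeasure_restrict_space) auto

lemma at_most_one:
  assumes x: "x \<in> E" and t: "t1 \<in> fl -` ((\<lambda>a. x + a) ` AS)" "t2 \<in> fl -` ((\<lambda>a. x + a) ` AS)"
  shows "t1 = t2"
proof (rule ccontr)
  assume ne: "t1 \<noteq> t2"
  obtain a1 a2 where a: "a1 \<in> AS" "a2 \<in> AS" "fl t1 = x + a1" "fl t2 = x + a2" using t by auto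
  have aE: "a1 \<in> E" "a2 \<in> E" using a by (auto simp: AS_def)
  have "\<not> (\<forall>\<gamma> < tgt. dset a1 \<gamma>)" using a(1) aE div_exp_tgt_iff GS_eq by (auto simp: AS_def)
  then obtain g1 where g1: "g1 < tgt" "\<not> dset a1 g1" by blast
  have "\<not> (\<forall>\<gamma> < tgt. dset a2 \<gamma>)" using a(2) aE div_exp_tgt_iff GS_eq by (auto simp: AS_def)
  then obtain g2 where g2: "g2 < tgt" "\<not> dset a2 g2" by blast
  define \<gamma> where "\<gamma> = max g1 g2"
  have "a1 - a2 = cscale (complex_of_real (t1 - t2)) gg"
    using fl_diff[of t1 t2] a by simp
  moreover have "dset (cscale (complex_of_real (t1 - t2)) gg) \<gamma>"
    using ne gg_dset[of \<gamma>] g1 g2 by (simp add: \<gamma>_def dset_cscale_iff)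
  ultimately have "dset (a1 + (- a2)) \<gamma>" by simp
  then have "dset a1 \<gamma> \<or> dset a2 \<gamma>" using dset_add dset_uminus by blast
  then show False using g1 g2 dset_mono[of a1 \<gamma> g1] dset_mono[of a2 \<gamma> g2] by (auto simp: \<gamma>_def)
qed

lemma prevalent_S: "prevalent T {c \<in> E. div_exp \<psi> c x0 = ereal tgt}"
proof -
  have hn: "haar_null_borel T AS"
    unfolding haar_null_borel_def
  proof (intro conjI exI[of _ mu])
    show "AS \<in> BS" by (rule AS_BS)
    show "space mu = topspace T" by (simp add: mu_def space_NB topspace_T)
    show "sets mu = BS" by (simp add: mu_def sets_NB)
    have pre: "fl -` E \<inter> space M0 = {0..1}" using fl_E by (auto simp: space_M0)
    have "emeasure mu (space NB) = emeasure M0 (fl -` space NB \<inter> space M0)"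
      unfolding mu_def by (rule emeasure_distr[OF fl_meas sets.top])
    then show "emeasure mu (space mu) = 1"
      by (simp add: mu_def space_NB pre emeasure_M0)
    define K where "K = fl ` {0..1}"
    have cK: "compactin T K" unfolding K_def
      by (rule image_compactin[OF _ fl_cont]) simp
    have KBS: "K \<in> BS"
    proof -
      have "closedin T K" by (rule compactin_imp_closedin[OF Hausdorff_T cK])
      then have "openin T (E - K)" by (simp add: closedin_def topspace_T)
      then have "E - K \<in> BS" by (rule open_BS)
      then have "E - (E - K) \<in> BS" by (rule algebra.compl_sets[OF sigma_algebra.axioms(1)[OF sa_BS]])
      moreover have "K \<subseteq> E" using fl_E by (auto simp: K_def)
      ultimately show ?thesis by (simp add: Diff_Diff_Int inf.absorb2)
    qed
    have "fl -` K \<inter> space M0 = {0..1}" by (auto simp: K_def space_M0)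
    then have "emeasure mu K = 1"
      using fl_meas KBS by (simp add: mu_def emeasure_distr sets_NB emeasure_M0)
    then show "\<exists>K. compactin T K \<and> K \<in> sets mu \<and> emeasure mu K = 1"
      using cK KBS by (intro exI[of _ K]) (simp add: mu_def sets_NB)
    show "\<forall>x\<in>topspace T. emeasure mu ((\<lambda>a. x + a) ` AS) = 0"
    proof
      fix x assume "x \<in> topspace T"
      then have x: "x \<in> E" by (simp add: topspace_T)
      show "emeasure mu ((\<lambda>a. x + a) ` AS) = 0"
      proof (cases "(\<lambda>a. x + a) ` AS \<in> sets mu")
        case False then show ?thesis by (rule emeasure_notin_sets)
      next
        case True
        have "emeasure mu ((\<lambda>a. x + a) ` AS) = emeasure M0 (fl -` ((\<lambda>a. x + a) ` AS) \<inter> space M0)"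
          using True fl_meas by (simp add: mu_def emeasure_distr)
        also have "\<dots> = emeasure lborel (fl -` ((\<lambda>a. x + a) ` AS) \<inter> space M0)"
          by (rule emeasure_M0) (auto simp: space_M0)
        also have "\<dots> = 0"
        proof (rule emeasure_lborel_countable)
          show "countable (fl -` ((\<lambda>a. x + a) ` AS) \<inter> space M0)"
          proof (cases "fl -` ((\<lambda>a. x + a) ` AS) \<inter> space M0 = {}")
            case False
            then obtain t0 where t0: "t0 \<in> fl -` ((\<lambda>a. x + a) ` AS)" by blast
            have "fl -` ((\<lambda>a. x + a) ` AS) \<inter> space M0 \<subseteq> {t0}"
              using at_most_one[OF x _ t0] by blast
            then show ?thesis by (rule countable_subset) simp
          qed simp
        qed
        finally show ?thesis .
      qed
    qed
  qed
  moreover have "topspace T - {c \<in> E. div_exp \<psi> c x0 = ereal tgt} \<subseteq> AS"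
    by (auto simp: topspace_T AS_def GS_eq)
  ultimately show ?thesis unfolding prevalent_def by blast
qed

end

theorem mainTheorem16:
  fixes \<psi> :: "'i::finite \<Rightarrow> real ^ 'd::finite \<Rightarrow> complex"
    and s :: real and p q :: ereal and x0 :: "real ^ 'd"
  assumes "\<And>i. bounded_fast_decay (\<psi> i)"
    and "dyadic_covering \<psi>"
    and "p > 0" and "q > 0"
  shows "prevalent (btop s p q) {c \<in> bspace s p q. div_exp \<psi> c x0 = ereal (- s + dp TYPE('d) p)}
       \<and> residual (btop s p q) {c \<in> bspace s p q. div_exp \<psi> c x0 = ereal (- s + dp TYPE('d) p)}
       \<and> maximal_lineable (bspace s p q) {c \<in> bspace s p q. div_exp \<psi> c x0 = ereal (- s + dp TYPE('d) p)}"
proof -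
  interpret w: wset \<psi> s p q x0 using assms by unfold_locales
  show ?thesis using w.prevalent_S w.residual_S w.lineable_S unfolding w.tgt_def by simp
qed

end
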